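(* Let $x,y$ be stable g-matchings with $x\prec_F y$. Then there exists a rotation $R\in\mathcal R(x)$ such that $x':=x+\chi^R$ satisfies $x'\preceq_F y$.
   Context: Let $G=(V,E)$ be a finite bipartite graph with color classes $W$ and $F$; the edge joining $w\in W$ and $f\in F$ is written $wf$. Let $b\in\mathbb Z_+^E$ be capacities. For $v\in V$, $E_v$ is the set of edges at $v$, $\mathcal B_v=\{z\in\mathbb Z_+^{E_v}: z\le b|_{E_v}\}$, $\mathbf 1^e$ the unit vector of $e$, $|z|=\sum_e|z(e)|$, $\wedge,\vee$ componentwise min/max. Each $v$ has a choice function $C_v:\mathcal B_v\to\mathcal B_v$ with $C_v(z)\le z$ and, for all $z,z'$: (A1) $z\ge z'\ge C_v(z)\Rightarrow C_v(z')=C_v(z)$; (A2) $z\ge z'\Rightarrow C_v(z)\wedge z'\le C_v(z')$; (A3) $z\ge z'\Rightarrow|C_v(z)|\ge|C_v(z')|$. $z$ is acceptable if $C_v(z)=z$; for distinct acceptable $z,z'$, $z'\prec_v z$ iff $C_v(z\vee z')=z$. $x_v$ = restriction of $x$ to $E_v$. A g-matching is $x\in\mathbb Z_+^E$, $x\le b$, each $x_v$ acceptable; $x\prec_F y$ (distinct) iff $x_f\preceq_f y_f$ for all $f\in F$. $e\in E_v$ is interesting for $v$ under acceptable $z$ if some $z'\in\mathcal B_v$ has $z'(e)>z(e)$, $z'(e')=z(e')$ for $e'\neq e$, $C_v(z')(e)>z(e)$; $e=wf$ blocks a g-matching $x$ if it is interesting for $w$ under $x_w$ and for $f$ under $x_f$;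 a g-matching is stable if no edge blocks it. Rotations: for stable $x$, $U_F^+(x)$ = edges $wf$ interesting for $f$ under $x_f$; $U_F^-(x)$ = edges $wf$ with $x(wf)>0$ not interesting for $f$. Legal $f$-pair: $(a,c)$, $a\in U_F^+(x)\cap E_f$, $c\in E_f\setminus\{a\}$, $C_f(x_f+\mathbf 1^a)=x_f+\mathbf 1^a-\mathbf 1^c$. Legal $w$-pair: $(c,a)$, $c\in U_F^-(x)\cap E_w$, $a\in U_F^+(x)\cap E_w$, $x_w+\mathbf 1^a-\mathbf 1^c$ acceptable; essential if no $d\in (U_F^+(x)\cap E_w)\setminus\{a\}$ is interesting for $w$ under $x_w+\mathbf 1^a-\mathbf 1^c$. Digraph $\mathcal D$: vertices $w^e,f^e$ for $e=wf\in U_F^+(x)\cup U_F^-(x)$, arcs $(w^a,f^a)$ for $a\in U_F^+(x)$, $(f^c,w^c)$ for $c\in U_F^-(x)$, $(f^a,f^c)$ for legal $f$-pairs $(a,c)$, $(w^c,w^a)$ for essential $w$-pairs $(c,a)$. Repeatedly delete vertices with no entering arc; each remaining directed cycle gives a cyclic sequence $(a_1,c_1,\dots,a_k,c_k)$ of distinct edges of $G$, a rotation $R\in\mathcal R(x)$ applicable to $x$, with $\chi^R$ equal to $1$ on $\{a_i\}$, $-1$ on $\{c_i\}$, $0$ elsewhere. *)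

theory Defs
  imports Main
begin

(* Vertices have type 'v; the edge wf is the pair (w,f) with w in W, f in F.
   Vectors indexed by edges are functions ('v * 'v) => nat (resp. int). *)

type_synonym 'v vec = "'v \<times> 'v \<Rightarrow> nat"

definition Ev :: "('v \<times> 'v) set \<Rightarrow> 'v \<Rightarrow> ('v \<times> 'v) set" where
  "Ev E v = {e \<in> E. fst e = v \<or> snd e = v}"

definition Bv :: "('v \<times> 'v) set \<Rightarrow> 'v vec \<Rightarrow> 'v \<Rightarrow> 'v vec set" where
  "Bv E b v = {z. (\<forall>e. e \<notin> Ev E v \<longrightarrow> z e = 0) \<and> (\<forall>e\<in>Ev E v. z e \<le> b e)}"

definition vnorm :: "('v \<times> 'v) set \<Rightarrow> 'v \<Rightarrow> 'v vec \<Rightarrow> nat" where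
  "vnorm E v z = (\<Sum>e\<in>Ev E v. z e)"

definition choice_function ::
  "('v \<times> 'v) set \<Rightarrow> 'v vec \<Rightarrow> 'v \<Rightarrow> ('v vec \<Rightarrow> 'v vec) \<Rightarrow> bool" where
  "choice_function E b v Cv \<longleftrightarrow>
     (\<forall>z\<in>Bv E b v. Cv z \<in> Bv E b v \<and> Cv z \<le> z) \<and>
     (\<forall>z\<in>Bv E b v. \<forall>z'\<in>Bv E b v. z \<ge> z' \<and> z' \<ge> Cv z \<longrightarrow> Cv z' = Cv z) \<and>
     (\<forall>z\<in>Bv E b v. \<forall>z'\<in>Bv E b v. z \<ge> z' \<longrightarrow> inf (Cv z) z' \<le> Cv z') \<and>
     (\<forall>z\<in>Bv E b v. \<forall>z'\<in>Bv E b v. z \<ge> z' \<longrightarrow> vnorm E v (Cv z) \<ge> vnorm E v (Cv z'))"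

definition setting ::
  "'v set \<Rightarrow> 'v set \<Rightarrow> ('v \<times> 'v) set \<Rightarrow> 'v vec \<Rightarrow> ('v \<Rightarrow> 'v vec \<Rightarrow> 'v vec) \<Rightarrow> bool" where
  "setting W F E b C \<longleftrightarrow> finite W \<and> finite F \<and> W \<inter> F = {} \<and> E \<subseteq> W \<times> F \<and>
     (\<forall>v\<in>W \<union> F. choice_function E b v (C v))"

definition restr :: "('v \<times> 'v) set \<Rightarrow> 'v \<Rightarrow> 'v vec \<Rightarrow> 'v vec" where
  "restr E v x = (\<lambda>e. if e \<in> Ev E v then x e else 0)"

definition unitv :: "'v \<times> 'v \<Rightarrow> 'v vec" where
  "unitv a = (\<lambda>e. if e = a then 1 else 0)"

definition acceptable ::
  "('v \<times> 'v) set \<Rightarrow> 'v vec \<Rightarrow> ('v \<Rightarrow> 'v vec \<Rightarrow> 'v vec) \<Rightarrow> 'v \<Rightarrow> 'v vec \<Rightarrow> bool" where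
  "acceptable E b C v z \<longleftrightarrow> z \<in> Bv E b v \<and> C v z = z"

text \<open>prefers E b C v z' z  means  z' \<prec>_v z.\<close>
definition prefers ::
  "('v \<times> 'v) set \<Rightarrow> 'v vec \<Rightarrow> ('v \<Rightarrow> 'v vec \<Rightarrow> 'v vec) \<Rightarrow> 'v \<Rightarrow> 'v vec \<Rightarrow> 'v vec \<Rightarrow> bool" where
  "prefers E b C v z' z \<longleftrightarrow> acceptable E b C v z \<and> acceptable E b C v z' \<and> z \<noteq> z' \<and>
     C v (sup z z') = z"

definition prefers_eq ::
  "('v \<times> 'v) set \<Rightarrow> 'v vec \<Rightarrow> ('v \<Rightarrow> 'v vec \<Rightarrow> 'v vec) \<Rightarrow> 'v \<Rightarrow> 'v vec \<Rightarrow> 'v vec \<Rightarrow> bool" where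
  "prefers_eq E b C v z' z \<longleftrightarrow> z' = z \<or> prefers E b C v z' z"

definition gmatching ::
  "'v set \<Rightarrow> 'v set \<Rightarrow> ('v \<times> 'v) set \<Rightarrow> 'v vec \<Rightarrow> ('v \<Rightarrow> 'v vec \<Rightarrow> 'v vec) \<Rightarrow> 'v vec \<Rightarrow> bool" where
  "gmatching W F E b C x \<longleftrightarrow> (\<forall>e. e \<notin> E \<longrightarrow> x e = 0) \<and> (\<forall>e\<in>E. x e \<le> b e) \<and>
     (\<forall>v\<in>W \<union> F. acceptable E b C v (restr E v x))"

definition precF ::
  "'v set \<Rightarrow> ('v \<times> 'v) set \<Rightarrow> 'v vec \<Rightarrow> ('v \<Rightarrow> 'v vec \<Rightarrow> 'v vec) \<Rightarrow> 'v vec \<Rightarrow> 'v vec \<Rightarrow> bool" where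
  "precF F E b C x y \<longleftrightarrow> x \<noteq> y \<and> (\<forall>f\<in>F. prefers_eq E b C f (restr E f x) (restr E f y))"

definition preceqF ::
  "'v set \<Rightarrow> ('v \<times> 'v) set \<Rightarrow> 'v vec \<Rightarrow> ('v \<Rightarrow> 'v vec \<Rightarrow> 'v vec) \<Rightarrow> 'v vec \<Rightarrow> 'v vec \<Rightarrow> bool" where
  "preceqF F E b C x y \<longleftrightarrow> x = y \<or> precF F E b C x y"

definition interesting ::
  "('v \<times> 'v) set \<Rightarrow> 'v vec \<Rightarrow> ('v \<Rightarrow> 'v vec \<Rightarrow> 'v vec) \<Rightarrow> 'v \<Rightarrow> 'v vec \<Rightarrow> 'v \<times> 'v \<Rightarrow> bool" where
  "interesting E b C v z e \<longleftrightarrow> e \<in> Ev E v \<and>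
     (\<exists>z'\<in>Bv E b v. z' e > z e \<and> (\<forall>e'. e' \<noteq> e \<longrightarrow> z' e' = z e') \<and> C v z' e > z e)"

definition blocks ::
  "('v \<times> 'v) set \<Rightarrow> 'v vec \<Rightarrow> ('v \<Rightarrow> 'v vec \<Rightarrow> 'v vec) \<Rightarrow> 'v vec \<Rightarrow> 'v \<times> 'v \<Rightarrow> bool" where
  "blocks E b C x e \<longleftrightarrow> e \<in> E \<and> interesting E b C (fst e) (restr E (fst e) x) e \<and>
     interesting E b C (snd e) (restr E (snd e) x) e"

definition stable ::
  "'v set \<Rightarrow> 'v set \<Rightarrow> ('v \<times> 'v) set \<Rightarrow> 'v vec \<Rightarrow> ('v \<Rightarrow> 'v vec \<Rightarrow> 'v vec) \<Rightarrow> 'v vec \<Rightarrow> bool" where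
  "stable W F E b C x \<longleftrightarrow> gmatching W F E b C x \<and> (\<forall>e. \<not> blocks E b C x e)"

definition UFplus ::
  "('v \<times> 'v) set \<Rightarrow> 'v vec \<Rightarrow> ('v \<Rightarrow> 'v vec \<Rightarrow> 'v vec) \<Rightarrow> 'v vec \<Rightarrow> ('v \<times> 'v) set" where
  "UFplus E b C x = {e \<in> E. interesting E b C (snd e) (restr E (snd e) x) e}"

definition UFminus ::
  "('v \<times> 'v) set \<Rightarrow> 'v vec \<Rightarrow> ('v \<Rightarrow> 'v vec \<Rightarrow> 'v vec) \<Rightarrow> 'v vec \<Rightarrow> ('v \<times> 'v) set" where
  "UFminus E b C x = {e \<in> E. x e > 0 \<and> \<not> interesting E b C (snd e) (restr E (snd e) x) e}"

text \<open>Legal f-pair (a,c) with f = snd a: C_f(x_f + 1^a) = x_f + 1^a - 1^c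
  (written additively to avoid truncated subtraction).\<close>
definition legal_fpair ::
  "('v \<times> 'v) set \<Rightarrow> 'v vec \<Rightarrow> ('v \<Rightarrow> 'v vec \<Rightarrow> 'v vec) \<Rightarrow> 'v vec \<Rightarrow> 'v \<times> 'v \<Rightarrow> 'v \<times> 'v \<Rightarrow> bool" where
  "legal_fpair E b C x a c \<longleftrightarrow> a \<in> UFplus E b C x \<and> c \<in> Ev E (snd a) \<and> c \<noteq> a \<and>
     (\<lambda>e. C (snd a) (\<lambda>e'. restr E (snd a) x e' + unitv a e') e + unitv c e)
       = (\<lambda>e. restr E (snd a) x e + unitv a e)"

text \<open>Legal w-pair (c,a) with w = fst c = fst a (x(c) > 0 as c is in U_F^-).\<close>
definition legal_wpair ::
  "('v \<times> 'v) set \<Rightarrow> 'v vec \<Rightarrow> ('v \<Rightarrow> 'v vec \<Rightarrow> 'v vec) \<Rightarrow> 'v vec \<Rightarrow> 'v \<times> 'v \<Rightarrow> 'v \<times> 'v \<Rightarrow> bool" where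
  "legal_wpair E b C x c a \<longleftrightarrow> c \<in> UFminus E b C x \<and> a \<in> UFplus E b C x \<and> fst c = fst a \<and>
     acceptable E b C (fst a) (\<lambda>e. restr E (fst a) x e + unitv a e - unitv c e)"

definition essential_wpair ::
  "('v \<times> 'v) set \<Rightarrow> 'v vec \<Rightarrow> ('v \<Rightarrow> 'v vec \<Rightarrow> 'v vec) \<Rightarrow> 'v vec \<Rightarrow> 'v \<times> 'v \<Rightarrow> 'v \<times> 'v \<Rightarrow> bool" where
  "essential_wpair E b C x c a \<longleftrightarrow> legal_wpair E b C x c a \<and>
     \<not> (\<exists>d \<in> (UFplus E b C x \<inter> Ev E (fst a)) - {a}.
          interesting E b C (fst a) (\<lambda>e. restr E (fst a) x e + unitv a e - unitv c e) d)"

datatype 'e dnode = Wn 'e | Fn 'e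

definition Dverts ::
  "('v \<times> 'v) set \<Rightarrow> 'v vec \<Rightarrow> ('v \<Rightarrow> 'v vec \<Rightarrow> 'v vec) \<Rightarrow> 'v vec \<Rightarrow> ('v \<times> 'v) dnode set" where
  "Dverts E b C x = Wn ` (UFplus E b C x \<union> UFminus E b C x) \<union> Fn ` (UFplus E b C x \<union> UFminus E b C x)"

definition Darcs ::
  "('v \<times> 'v) set \<Rightarrow> 'v vec \<Rightarrow> ('v \<Rightarrow> 'v vec \<Rightarrow> 'v vec) \<Rightarrow> 'v vec \<Rightarrow>
   (('v \<times> 'v) dnode \<times> ('v \<times> 'v) dnode) set" where
  "Darcs E b C x = ({(Wn a, Fn a) | a. a \<in> UFplus E b C x}
     \<union> {(Fn c, Wn c) | c. c \<in> UFminus E b C x}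
     \<union> {(Fn a, Fn c) | a c. legal_fpair E b C x a c}
     \<union> {(Wn c, Wn a) | c a. essential_wpair E b C x c a})
     \<inter> (Dverts E b C x \<times> Dverts E b C x)"

definition del_step :: "('n \<times> 'n) set \<Rightarrow> 'n set \<Rightarrow> 'n set" where
  "del_step A S = {v \<in> S. \<exists>u\<in>S. (u, v) \<in> A}"

text \<open>Repeated deletion; card(vertex set) rounds suffice to reach the fixed point.\<close>
definition remaining ::
  "('v \<times> 'v) set \<Rightarrow> 'v vec \<Rightarrow> ('v \<Rightarrow> 'v vec \<Rightarrow> 'v vec) \<Rightarrow> 'v vec \<Rightarrow> ('v \<times> 'v) dnode set" where
  "remaining E b C x = (del_step (Darcs E b C x) ^^ card (Dverts E b C x)) (Dverts E b C x)"

definition dir_cycle :: "('n \<times> 'n) set \<Rightarrow> 'n set \<Rightarrow> 'n list \<Rightarrow> bool" where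
  "dir_cycle A S vs \<longleftrightarrow> vs \<noteq> [] \<and> distinct vs \<and> set vs \<subseteq> S \<and>
     (\<forall>i<length vs. (vs ! i, vs ! ((i + 1) mod length vs)) \<in> A)"

text \<open>A rotation is represented by the list [(a_1,c_1),...,(a_k,c_k)]; its directed cycle in
  the remaining digraph is w^{a_1} f^{a_1} f^{c_1} w^{c_1} w^{a_2} ... w^{c_k} (back to w^{a_1}).\<close>
definition cycle_nodes :: "(('v \<times> 'v) \<times> ('v \<times> 'v)) list \<Rightarrow> ('v \<times> 'v) dnode list" where
  "cycle_nodes R = concat (map (\<lambda>(a, c). [Wn a, Fn a, Fn c, Wn c]) R)"

definition rotations ::
  "('v \<times> 'v) set \<Rightarrow> 'v vec \<Rightarrow> ('v \<Rightarrow> 'v vec \<Rightarrow> 'v vec) \<Rightarrow> 'v vec \<Rightarrow>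
   (('v \<times> 'v) \<times> ('v \<times> 'v)) list set" where
  "rotations E b C x = {R. R \<noteq> [] \<and> distinct (concat (map (\<lambda>(a, c). [a, c]) R)) \<and>
     dir_cycle (Darcs E b C x) (remaining E b C x) (cycle_nodes R)}"

definition chi :: "(('v \<times> 'v) \<times> ('v \<times> 'v)) list \<Rightarrow> 'v \<times> 'v \<Rightarrow> int" where
  "chi R e = (if e \<in> fst ` set R then 1 else if e \<in> snd ` set R then -1 else 0)"

end

theory Submission
  imports Defs
begin


lemma Bv_zero: "z \<in> Bv E b v \<Longrightarrow> e \<notin> Ev E v \<Longrightarrow> z e = 0" unfolding Bv_def by blast
lemma Bv_le: "z \<in> Bv E b v \<Longrightarrow> e \<in> Ev E v \<Longrightarrow> z e \<le> b e" by (simp add: Bv_def)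
lemma BvI: "(\<And>e. e \<notin> Ev E v \<Longrightarrow> z e = 0) \<Longrightarrow> (\<And>e. e \<in> Ev E v \<Longrightarrow> z e \<le> b e) \<Longrightarrow> z \<in> Bv E b v"
  by (simp add: Bv_def)
lemma Bv_down: "z \<in> Bv E b v \<Longrightarrow> (\<And>e. z' e \<le> z e) \<Longrightarrow> z' \<in> Bv E b v"
proof -
  assume a: "z \<in> Bv E b v" "\<And>e. z' e \<le> z e"
  show ?thesis
  proof (rule BvI)
    fix e assume "e \<notin> Ev E v" then show "z' e = 0" using a Bv_zero by (metis le_zero_eq)
  next
    fix e assume "e \<in> Ev E v" then show "z' e \<le> b e" using a Bv_le le_trans by metis
  qed
qed
lemma Bv_sup: "z \<in> Bv E b v \<Longrightarrow> z' \<in> Bv E b v \<Longrightarrow> sup z z' \<in> Bv E b v"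
  by (simp add: Bv_def sup_max)
lemma Bv_upd: "z \<in> Bv E b v \<Longrightarrow> e \<in> Ev E v \<Longrightarrow> k \<le> b e \<Longrightarrow> z(e := k) \<in> Bv E b v"
  by (simp add: Bv_def)
lemma Bv_eqI: "z \<in> Bv E b v \<Longrightarrow> z' \<in> Bv E b v \<Longrightarrow> (\<And>e. e \<in> Ev E v \<Longrightarrow> z e = z' e) \<Longrightarrow> z = z'"
  by (rule ext) (metis Bv_zero)

lemma vnorm_mono: "(\<And>e. e \<in> Ev E v \<Longrightarrow> g e \<le> h e) \<Longrightarrow> vnorm E v g \<le> vnorm E v h"
  unfolding vnorm_def by (rule sum_mono) auto
lemma vnorm_less: "finite (Ev E v) \<Longrightarrow> (\<And>e. e \<in> Ev E v \<Longrightarrow> g e \<le> h e) \<Longrightarrow> e0 \<in> Ev E v \<Longrightarrow> g e0 < h e0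
   \<Longrightarrow> vnorm E v g < vnorm E v h"
  unfolding vnorm_def by (rule sum_strict_mono_ex1) auto
lemma vnorm_eq: "finite (Ev E v) \<Longrightarrow> (\<And>e. e \<in> Ev E v \<Longrightarrow> g e \<le> h e) \<Longrightarrow> vnorm E v h \<le> vnorm E v g
   \<Longrightarrow> e \<in> Ev E v \<Longrightarrow> g e = h e"
  by (metis le_neq_implies_less not_le vnorm_less)
lemma vnorm_unit: "finite (Ev E v) \<Longrightarrow> a \<in> Ev E v \<Longrightarrow> vnorm E v (\<lambda>e. z e + unitv a e) = vnorm E v z + 1"
  unfolding vnorm_def unitv_def by (simp add: sum.distrib)
lemma vnorm_ind: "finite (Ev E v) \<Longrightarrow> vnorm E v (\<lambda>e. z e + (if e \<in> A then 1 else 0)) = vnorm E v z + card (Ev E v \<inter> A)"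
  unfolding vnorm_def by (simp add: sum.distrib sum.If_cases Int_def)

context fixes E b v and Cv :: "'v vec \<Rightarrow> 'v vec"
  assumes cf: "choice_function E b v Cv"
begin
lemma C_in: "z \<in> Bv E b v \<Longrightarrow> Cv z \<in> Bv E b v"
  using cf unfolding choice_function_def by blast
lemma C_le: "z \<in> Bv E b v \<Longrightarrow> Cv z e \<le> z e"
  using cf unfolding choice_function_def le_fun_def by blast
lemma A1: "z \<in> Bv E b v \<Longrightarrow> z' \<in> Bv E b v \<Longrightarrow> (\<And>e. z' e \<le> z e) \<Longrightarrow> (\<And>e. Cv z e \<le> z' e) \<Longrightarrow> Cv z' = Cv z"
  using cf unfolding choice_function_def le_fun_def by blast
lemma A2: "z \<in> Bv E b v \<Longrightarrow> z' \<in> Bv E b v \<Longrightarrow> (\<And>e. z' e \<le> z e) \<Longrightarrow> min (Cv z e) (z' e) \<le> Cv z' e"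
proof -
  assume "z \<in> Bv E b v" "z' \<in> Bv E b v" "\<And>e. z' e \<le> z e"
  then have "inf (Cv z) z' \<le> Cv z'" using cf unfolding choice_function_def le_fun_def by blast
  from le_funD[OF this, of e] show ?thesis by (simp add: inf_min)
qed
lemma A3: "z \<in> Bv E b v \<Longrightarrow> z' \<in> Bv E b v \<Longrightarrow> (\<And>e. z' e \<le> z e) \<Longrightarrow> vnorm E v (Cv z') \<le> vnorm E v (Cv z)"
  using cf unfolding choice_function_def le_fun_def by blast
lemma idem: "z \<in> Bv E b v \<Longrightarrow> Cv (Cv z) = Cv z"
  by (rule A1) (auto intro: C_in C_le)

lemma int_intro:
  assumes "z \<in> Bv E b v" "u \<in> Bv E b v" "\<And>e. z e \<le> u e" "e \<in> Ev E v" "z e < k" "k \<le> u e" "k \<le> Cv u e"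
  shows "\<exists>z'\<in>Bv E b v. z' e > z e \<and> (\<forall>e'. e' \<noteq> e \<longrightarrow> z' e' = z e') \<and> Cv z' e > z e"
proof (intro bexI conjI)
  let ?z = "z(e := k)"
  show zb: "?z \<in> Bv E b v" using assms by (intro Bv_upd) (auto dest: Bv_le)
  have "min (Cv u e) (?z e) \<le> Cv ?z e"
    by (rule A2[OF assms(2) zb]) (use assms in auto)
  then show "Cv ?z e > z e" using assms by simp
qed (use assms in auto)

lemma notint_le:
  assumes "\<not> (\<exists>z'\<in>Bv E b v. z' e > z e \<and> (\<forall>e'. e' \<noteq> e \<longrightarrow> z' e' = z e') \<and> Cv z' e > z e)"
    "z' \<in> Bv E b v" "\<forall>e'. e' \<noteq> e \<longrightarrow> z' e' = z e'" "z' e > z e"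
  shows "Cv z' e \<le> z e"
  using assms by auto
end


locale ctx =
  fixes W F :: "'v set" and E :: "('v \<times> 'v) set" and b x y :: "'v vec"
    and C :: "'v \<Rightarrow> 'v vec \<Rightarrow> 'v vec"
  assumes sett: "setting W F E b C" and sx: "stable W F E b C x" and sy: "stable W F E b C y"
    and pxy: "precF F E b C x y"
begin

abbreviation "xv v \<equiv> restr E v x"
abbreviation "yv v \<equiv> restr E v y"

lemma finW: "finite W" and finF: "finite F" and disj: "W \<inter> F = {}" and EWF: "E \<subseteq> W \<times> F"
  and cfv: "v \<in> W \<union> F \<Longrightarrow> choice_function E b v (C v)"
  using sett unfolding setting_def by auto

lemma finE: "finite E" using finW finF EWF finite_subset by blast
lemma finEv: "finite (Ev E v)" using finE unfolding Ev_def by auto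
lemma edge: "e \<in> E \<Longrightarrow> fst e \<in> W \<and> snd e \<in> F" using EWF by auto
lemma EvW: "w \<in> W \<Longrightarrow> Ev E w = {e\<in>E. fst e = w}"
  unfolding Ev_def using edge disj by fastforce
lemma EvF: "f \<in> F \<Longrightarrow> Ev E f = {e\<in>E. snd e = f}"
  unfolding Ev_def using edge disj by fastforce
lemma Ev_E: "e \<in> Ev E v \<Longrightarrow> e \<in> E" unfolding Ev_def by auto
lemma in_Ev_fst: "e \<in> E \<Longrightarrow> e \<in> Ev E (fst e)" unfolding Ev_def by auto
lemma in_Ev_snd: "e \<in> E \<Longrightarrow> e \<in> Ev E (snd e)" unfolding Ev_def by auto
lemma Ev_fst: "w \<in> W \<Longrightarrow> e \<in> Ev E w \<Longrightarrow> fst e = w" using EvW by auto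
lemma Ev_snd: "f \<in> F \<Longrightarrow> e \<in> Ev E f \<Longrightarrow> snd e = f" using EvF by auto

lemma restr_in: "e \<in> Ev E v \<Longrightarrow> restr E v z e = z e" by (simp add: restr_def)
lemma restr_out: "e \<notin> Ev E v \<Longrightarrow> restr E v z e = 0" by (simp add: restr_def)

lemma gm_acc: "stable W F E b C z \<Longrightarrow> v \<in> W \<union> F \<Longrightarrow> restr E v z \<in> Bv E b v \<and> C v (restr E v z) = restr E v z"
proof -
  assume "stable W F E b C z" "v \<in> W \<union> F"
  then have "acceptable E b C v (restr E v z)" unfolding stable_def gmatching_def by metis
  then show ?thesis unfolding acceptable_def by simp
qed
lemma gm_zero: "stable W F E b C z \<Longrightarrow> e \<notin> E \<Longrightarrow> z e = 0"
  unfolding stable_def gmatching_def by metis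
lemma gm_le: "stable W F E b C z \<Longrightarrow> z e \<le> b e \<or> e \<notin> E"
  unfolding stable_def gmatching_def by metis
lemma gm_noblock: "stable W F E b C z \<Longrightarrow> e \<in> E \<Longrightarrow>
   interesting E b C (fst e) (restr E (fst e) z) e \<Longrightarrow> \<not> interesting E b C (snd e) (restr E (snd e) z) e"
proof -
  assume "stable W F E b C z" "e \<in> E" "interesting E b C (fst e) (restr E (fst e) z) e"
  moreover then have "\<not> blocks E b C z e" unfolding stable_def by metis
  ultimately show ?thesis unfolding blocks_def by simp
qed

lemma xB: "v \<in> W \<union> F \<Longrightarrow> xv v \<in> Bv E b v" using gm_acc[OF sx] by blast
lemma yB: "v \<in> W \<union> F \<Longrightarrow> yv v \<in> Bv E b v" using gm_acc[OF sy] by blast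
lemma xC: "v \<in> W \<union> F \<Longrightarrow> C v (xv v) = xv v" using gm_acc[OF sx] by blast
lemma yC: "v \<in> W \<union> F \<Longrightarrow> C v (yv v) = yv v" using gm_acc[OF sy] by blast

lemma xy_ne: "x \<noteq> y" using pxy unfolding precF_def by blast

lemma pref_f: assumes "f \<in> F" shows "C f (sup (yv f) (xv f)) = yv f"
proof -
  have "prefers_eq E b C f (xv f) (yv f)" using pxy assms unfolding precF_def by blast
  then show ?thesis unfolding prefers_eq_def prefers_def using yC assms by auto
qed

lemma interesting_iff: "interesting E b C v z e \<longleftrightarrow> e \<in> Ev E v \<and>
     (\<exists>z'\<in>Bv E b v. z' e > z e \<and> (\<forall>e'. e' \<noteq> e \<longrightarrow> z' e' = z e') \<and> C v z' e > z e)"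
  by (simp add: interesting_def)

lemma int_gt_f: assumes f: "f \<in> F" and e: "e \<in> Ev E f" and gt: "y e > x e"
  shows "interesting E b C f (xv f) e"
proof -
  have fv: "f \<in> W \<union> F" using f by auto
  have "\<exists>z'\<in>Bv E b f. z' e > xv f e \<and> (\<forall>e'. e' \<noteq> e \<longrightarrow> z' e' = xv f e') \<and> C f z' e > xv f e"
  proof (rule int_intro[OF cfv[OF fv] xB[OF fv] Bv_sup[OF yB[OF fv] xB[OF fv]]])
    show "\<And>e'. xv f e' \<le> sup (yv f) (xv f) e'" by simp
    show "e \<in> Ev E f" by fact
    show "xv f e < y e" using gt e by (simp add: restr_in)
    show "y e \<le> sup (yv f) (xv f) e" using e by (simp add: restr_in)
    show "y e \<le> C f (sup (yv f) (xv f)) e" using pref_f[OF f] e by (simp add: restr_in)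
  qed
  then show ?thesis using e by (simp add: interesting_iff)
qed

lemma polar: assumes w: "w \<in> W" shows "C w (sup (xv w) (yv w)) = xv w"
proof -
  have wv: "w \<in> W \<union> F" using w by auto
  let ?u = "sup (xv w) (yv w)"
  have uB: "?u \<in> Bv E b w" by (rule Bv_sup[OF xB[OF wv] yB[OF wv]])
  have le: "C w ?u e \<le> xv w e" for e
  proof (rule ccontr)
    assume "\<not> C w ?u e \<le> xv w e"
    then have gt: "C w ?u e > xv w e" by simp
    have eE: "e \<in> Ev E w"
    proof (rule ccontr)
      assume "e \<notin> Ev E w"
      then have "C w ?u e = 0" by (rule Bv_zero[OF C_in[OF cfv[OF wv] uB]])
      then show False using gt by simp
    qed
    have ee: "e \<in> E" "fst e = w" using eE Ev_E Ev_fst w by auto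
    have cle: "C w ?u e \<le> ?u e" by (rule C_le[OF cfv[OF wv] uB])
    have ue: "?u e = max (x e) (y e)" using eE by (simp add: restr_in sup_max)
    have xe: "xv w e = x e" using eE by (simp add: restr_in)
    have ygt: "y e > x e" using cle ue gt xe by linarith
    have "\<exists>z'\<in>Bv E b w. z' e > xv w e \<and> (\<forall>e'. e' \<noteq> e \<longrightarrow> z' e' = xv w e') \<and> C w z' e > xv w e"
      by (rule int_intro[OF cfv[OF wv] xB[OF wv] uB _ eE gt cle order.refl]) simp
    then have i1: "interesting E b C w (xv w) e" using eE by (simp add: interesting_iff)
    have f: "snd e \<in> F" using edge ee by auto
    have i2: "interesting E b C (snd e) (xv (snd e)) e"
      by (rule int_gt_f[OF f in_Ev_snd[OF ee(1)] ygt])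
    show False using gm_noblock[OF sx ee(1)] i1 i2 ee(2) by simp
  qed
  have "C w (xv w) = C w ?u"
    by (rule A1[OF cfv[OF wv] uB xB[OF wv]]) (simp_all add: le)
  then show ?thesis using xC wv by simp
qed

lemma vnorm_restr: "vnorm E v (restr E v z) = (\<Sum>e\<in>Ev E v. z e)"
  unfolding vnorm_def by (simp add: restr_in)

lemma sumF: "stable W F E b C z \<Longrightarrow> (\<Sum>f\<in>F. vnorm E f (restr E f z)) = (\<Sum>e\<in>E. z e)"
proof -
  have "(\<Sum>f\<in>F. vnorm E f (restr E f z)) = (\<Sum>f\<in>F. \<Sum>e\<in>{e\<in>E. snd e = f}. z e)"
    by (rule sum.cong) (auto simp: vnorm_restr EvF)
  also have "\<dots> = (\<Sum>e\<in>E. z e)" by (rule sum.group[OF finE finF]) (use edge in auto)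
  finally show ?thesis .
qed
lemma sumW: "stable W F E b C z \<Longrightarrow> (\<Sum>w\<in>W. vnorm E w (restr E w z)) = (\<Sum>e\<in>E. z e)"
proof -
  have "(\<Sum>w\<in>W. vnorm E w (restr E w z)) = (\<Sum>w\<in>W. \<Sum>e\<in>{e\<in>E. fst e = w}. z e)"
    by (rule sum.cong) (auto simp: vnorm_restr EvW)
  also have "\<dots> = (\<Sum>e\<in>E. z e)" by (rule sum.group[OF finE finW]) (use edge in auto)
  finally show ?thesis .
qed

lemma size_f_le: "f \<in> F \<Longrightarrow> vnorm E f (xv f) \<le> vnorm E f (yv f)"
proof -
  assume f: "f \<in> F" then have fv: "f \<in> W \<union> F" by auto
  have "vnorm E f (C f (yv f)) \<le> vnorm E f (C f (sup (yv f) (xv f)))"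
    by (rule A3[OF cfv[OF fv] Bv_sup[OF yB[OF fv] xB[OF fv]] yB[OF fv]]) simp
  moreover have "vnorm E f (C f (xv f)) \<le> vnorm E f (C f (sup (yv f) (xv f)))"
    by (rule A3[OF cfv[OF fv] Bv_sup[OF yB[OF fv] xB[OF fv]] xB[OF fv]]) simp
  ultimately show ?thesis using pref_f[OF f] xC[OF fv] by simp
qed
lemma size_w_le: "w \<in> W \<Longrightarrow> vnorm E w (yv w) \<le> vnorm E w (xv w)"
proof -
  assume w: "w \<in> W" then have wv: "w \<in> W \<union> F" by auto
  have "vnorm E w (C w (yv w)) \<le> vnorm E w (C w (sup (xv w) (yv w)))"
    by (rule A3[OF cfv[OF wv] Bv_sup[OF xB[OF wv] yB[OF wv]] yB[OF wv]]) simp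
  then show ?thesis using polar[OF w] yC[OF wv] by simp
qed

lemma sizes: "v \<in> W \<union> F \<Longrightarrow> vnorm E v (xv v) = vnorm E v (yv v)"
proof -
  have sF: "(\<Sum>f\<in>F. vnorm E f (xv f)) \<le> (\<Sum>f\<in>F. vnorm E f (yv f))"
    by (rule sum_mono) (rule size_f_le)
  have sW: "(\<Sum>w\<in>W. vnorm E w (yv w)) \<le> (\<Sum>w\<in>W. vnorm E w (xv w))"
    by (rule sum_mono) (rule size_w_le)
  have eqF: "(\<Sum>f\<in>F. vnorm E f (xv f)) = (\<Sum>f\<in>F. vnorm E f (yv f))"
    using sF sW sumF[OF sx] sumF[OF sy] sumW[OF sx] sumW[OF sy] by linarith
  have eqW: "(\<Sum>w\<in>W. vnorm E w (yv w)) = (\<Sum>w\<in>W. vnorm E w (xv w))"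
    using sF sW sumF[OF sx] sumF[OF sy] sumW[OF sx] sumW[OF sy] by linarith
  assume "v \<in> W \<union> F"
  then show ?thesis
  proof
    assume w: "v \<in> W"
    show ?thesis
    proof (rule ccontr)
      assume "vnorm E v (xv v) \<noteq> vnorm E v (yv v)"
      then have "vnorm E v (yv v) < vnorm E v (xv v)" using size_w_le[OF w] by simp
      then have "(\<Sum>w\<in>W. vnorm E w (yv w)) < (\<Sum>w\<in>W. vnorm E w (xv w))"
        using sum_strict_mono_ex1[OF finW, of "\<lambda>w. vnorm E w (yv w)" "\<lambda>w. vnorm E w (xv w)"] size_w_le w
        by blast
      then show False using eqW by simp
    qed
  next
    assume f: "v \<in> F"
    show ?thesis
    proof (rule ccontr)
      assume "vnorm E v (xv v) \<noteq> vnorm E v (yv v)"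
      then have "vnorm E v (xv v) < vnorm E v (yv v)" using size_f_le[OF f] by simp
      then have "(\<Sum>f\<in>F. vnorm E f (xv f)) < (\<Sum>f\<in>F. vnorm E f (yv f))"
        using sum_strict_mono_ex1[OF finF, of "\<lambda>f. vnorm E f (xv f)" "\<lambda>f. vnorm E f (yv f)"] size_f_le f
        by blast
      then show False using eqF by simp
    qed
  qed
qed

end


context ctx begin

abbreviation "Up \<equiv> UFplus E b C x"
abbreviation "Um \<equiv> UFminus E b C x"
definition "Q a \<longleftrightarrow> y a > x a \<or> \<not> interesting E b C (snd a) (yv (snd a)) a"

lemma Up_iff: "a \<in> Up \<longleftrightarrow> a \<in> E \<and> interesting E b C (snd a) (xv (snd a)) a"
  by (simp add: UFplus_def)
lemma Um_iff: "c \<in> Um \<longleftrightarrow> c \<in> E \<and> x c > 0 \<and> \<not> interesting E b C (snd c) (xv (snd c)) c"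
  by (simp add: UFminus_def)
lemma Up_Um: "a \<in> Up \<Longrightarrow> a \<notin> Um" by (simp add: Up_iff Um_iff)

lemma int_room: "interesting E b C v z e \<Longrightarrow> z e < b e"
  unfolding interesting_iff using Bv_le by (metis less_le_trans)

lemma int_one: assumes v: "v \<in> W \<union> F" and zB: "z \<in> Bv E b v" and i: "interesting E b C v z e"
  shows "C v (z(e := z e + 1)) e = z e + 1"
proof -
  let ?h = "z(e := z e + 1)"
  have eE: "e \<in> Ev E v" and rb: "z e < b e" using i int_room interesting_iff by blast+
  have hB: "?h \<in> Bv E b v" by (rule Bv_upd[OF zB eE]) (use rb in simp)
  obtain z' where z'B: "z' \<in> Bv E b v" and z'e: "z' e > z e" and z'o: "\<forall>e'. e' \<noteq> e \<longrightarrow> z' e' = z e'"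
    and Cz': "C v z' e > z e" using i unfolding interesting_iff by blast
  have "min (C v z' e) (?h e) \<le> C v ?h e"
    by (rule A2[OF cfv[OF v] z'B hB]) (use z'e z'o in auto)
  moreover have "C v ?h e \<le> ?h e" by (rule C_le[OF cfv[OF v] hB])
  ultimately show ?thesis using Cz' by simp
qed

lemma addu_eq: "(\<lambda>e. g e + unitv a e) = g(a := g a + 1)"
  by (rule ext) (simp add: unitv_def)

lemma fstep:
  assumes aU: "a \<in> Up" and Qa: "Q a"
  shows "\<exists>c. legal_fpair E b C x a c \<and> c \<in> Um \<and> y c < x c"
proof -
  define f where "f = snd a"
  have aE: "a \<in> E" and ia: "interesting E b C f (xv f) a" using aU by (simp_all add: Up_iff f_def)
  have f: "f \<in> F" using edge[OF aE] f_def by simp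
  have fv: "f \<in> W \<union> F" using f by simp
  note cf = cfv[OF fv]
  have aEv: "a \<in> Ev E f" using in_Ev_snd[OF aE] f_def by simp
  have xa: "xv f a = x a" using aEv by (simp add: restr_in)
  have rb: "x a < b a" using int_room[OF ia] xa by simp
  define h where "h = (xv f)(a := x a + 1)"
  have hB: "h \<in> Bv E b f" unfolding h_def by (rule Bv_upd[OF xB[OF fv] aEv]) (use rb in simp)
  define M where "M = sup (yv f) (xv f)"
  have MB: "M \<in> Bv E b f" unfolding M_def by (rule Bv_sup[OF yB[OF fv] xB[OF fv]])
  have CM: "C f M = yv f" unfolding M_def by (rule pref_f[OF f])
  define t where "t = sup M h"
  have tB: "t \<in> Bv E b f" unfolding t_def by (rule Bv_sup[OF MB hB])
  have Mt: "M e \<le> t e" for e unfolding t_def by simp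
  have ht: "h e \<le> t e" for e unfolding t_def by simp
  have Ctle: "C f t e \<le> yv f e" for e
  proof (cases "e = a")
    case True
    show ?thesis
    proof (cases "y a > x a")
      case True
      have "t a = y a" using True aEv unfolding t_def M_def h_def by (simp add: restr_in sup_max)
      then show ?thesis using C_le[OF cf tB, of a] \<open>e = a\<close> aEv by (simp add: restr_in)
    next
      case False
      then have ni: "\<not> interesting E b C f (yv f) a" using Qa f_def Q_def by simp
      define y' where "y' = (yv f)(a := x a + 1)"
      have y'B: "y' \<in> Bv E b f" unfolding y'_def by (rule Bv_upd[OF yB[OF fv] aEv]) (use rb in simp)
      have y't: "y' e \<le> t e" for e unfolding y'_def t_def M_def h_def by simp
      have ya: "yv f a = y a" using aEv by (simp add: restr_in)
      have "C f y' a \<le> yv f a"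
      proof (rule ccontr)
        assume "\<not> C f y' a \<le> yv f a"
        then have "interesting E b C f (yv f) a" unfolding interesting_iff
          using aEv y'B False ya by (intro conjI bexI[of _ y']) (auto simp: y'_def)
        then show False using ni by simp
      qed
      moreover have "min (C f t a) (y' a) \<le> C f y' a" by (rule A2[OF cf tB y'B y't])
      moreover have "C f t a \<le> t a" by (rule C_le[OF cf tB])
      moreover have "t a = x a + 1" using False aEv unfolding t_def M_def h_def by (simp add: restr_in sup_max)
      moreover have "y' a = x a + 1" unfolding y'_def by simp
      ultimately show ?thesis using True by simp
    qed
  next
    case False
    have "min (C f t e) (M e) \<le> C f M e" by (rule A2[OF cf tB MB Mt])
    moreover have "C f t e \<le> t e" by (rule C_le[OF cf tB])
    moreover have "t e = M e" using False unfolding t_def h_def M_def by simp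
    ultimately show ?thesis using CM by simp
  qed
  have Ct: "C f t = yv f"
  proof -
    have yt: "yv f e \<le> t e" for e using Mt[of e] unfolding M_def by simp
    have "C f (yv f) = C f t" by (rule A1[OF cf tB yB[OF fv]]) (simp_all add: Ctle yt)
    then show ?thesis using yC[OF fv] by simp
  qed
  define g where "g = C f h"
  have gB: "g \<in> Bv E b f" unfolding g_def by (rule C_in[OF cf hB])
  have gh: "g e \<le> h e" for e unfolding g_def by (rule C_le[OF cf hB])
  have ga: "g a = x a + 1" unfolding g_def h_def using int_one[OF fv xB[OF fv] ia] xa by simp
  have nh: "vnorm E f h = vnorm E f (xv f) + 1"
    unfolding h_def using vnorm_unit[OF finEv aEv, of "xv f"] addu_eq[of "xv f" a] xa by simp
  have szf: "vnorm E f (xv f) = vnorm E f (yv f)" by (rule sizes[OF fv])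
  have gne: "g \<noteq> h"
  proof
    assume "g = h"
    have "vnorm E f (C f h) \<le> vnorm E f (C f t)" by (rule A3[OF cf tB hB ht])
    then show False using \<open>g = h\<close> g_def Ct nh szf by simp
  qed
  obtain c where gc: "g c < h c"
  proof -
    obtain e where "g e \<noteq> h e" using gne by blast
    then have "g e < h e" using gh[of e] by simp
    then show ?thesis using that by blast
  qed
  have cEv: "c \<in> Ev E f"
  proof (rule ccontr)
    assume "c \<notin> Ev E f" then have "h c = 0" by (rule Bv_zero[OF hB])
    then show False using gc by simp
  qed
  have ca: "c \<noteq> a" using gc ga h_def by auto
  define g' where "g' = g(c := g c + 1)"
  have g'h: "g' e \<le> h e" for e using gh[of e] gc unfolding g'_def by auto
  have ng': "vnorm E f g' = vnorm E f g + 1"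
    unfolding g'_def using vnorm_unit[OF finEv cEv, of g] addu_eq[of g c] by simp
  have ngx: "vnorm E f (xv f) \<le> vnorm E f g"
  proof -
    have "vnorm E f (C f (xv f)) \<le> vnorm E f (C f h)" by (rule A3[OF cf hB xB[OF fv]]) (simp add: h_def xa)
    then show ?thesis using xC[OF fv] g_def by simp
  qed
  have g'eq: "g' = h"
  proof (rule ext)
    fix e
    show "g' e = h e"
    proof (cases "e \<in> Ev E f")
      case True
      show ?thesis by (rule vnorm_eq[OF finEv g'h _ True]) (use nh ng' ngx in simp)
    next
      case False
      then have "e \<noteq> c" using cEv by auto
      then show ?thesis using Bv_zero[OF gB False] Bv_zero[OF hB False] g'_def by simp
    qed
  qed
  have gcx: "g c + 1 = x c" and gcx2: "g c = x c - 1"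
    using fun_cong[OF g'eq, of c] ca cEv unfolding g'_def h_def by (auto simp: restr_in)
  have ngv: "vnorm E f g = vnorm E f (xv f)" using ng' g'eq nh by simp
  have legal: "legal_fpair E b C x a c"
    unfolding legal_fpair_def
  proof (intro conjI)
    show "a \<in> Up" by fact
    show "c \<in> Ev E (snd a)" using cEv f_def by simp
    show "c \<noteq> a" by fact
    have "(\<lambda>e'. restr E (snd a) x e' + unitv a e') = h" unfolding h_def f_def[symmetric] addu_eq using xa by simp
    then show "(\<lambda>e. C (snd a) (\<lambda>e'. restr E (snd a) x e' + unitv a e') e + unitv c e) =
      (\<lambda>e. restr E (snd a) x e + unitv a e)"
      using g'eq addu_eq[of g c] g'_def g_def f_def by simp
  qed
  have ycx: "y c < x c"
  proof -
    have "min (C f t c) (h c) \<le> g c" unfolding g_def by (rule A2[OF cf tB hB ht])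
    moreover have "h c = x c" using ca cEv unfolding h_def by (simp add: restr_in)
    moreover have "C f t c = y c" using Ct cEv by (simp add: restr_in)
    ultimately show ?thesis using gcx by simp
  qed
  have cE: "c \<in> E" using Ev_E[OF cEv] .
  have sc: "snd c = f" using Ev_snd[OF f cEv] .
  have nic: "\<not> interesting E b C f (xv f) c"
  proof
    assume "interesting E b C f (xv f) c"
    then obtain z'' where z''B: "z'' \<in> Bv E b f" and z''c: "z'' c > xv f c"
      and z''o: "\<forall>e'. e' \<noteq> c \<longrightarrow> z'' e' = xv f e'" and Cz'': "C f z'' c > xv f c"
      unfolding interesting_iff by blast
    have xc: "xv f c = x c" using cEv by (simp add: restr_in)
    define u where "u = sup z'' h"
    have uB: "u \<in> Bv E b f" unfolding u_def by (rule Bv_sup[OF z''B hB])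
    have hu: "h e \<le> u e" for e unfolding u_def by simp
    have z''u: "z'' e \<le> u e" for e unfolding u_def by simp
    have Cug: "C f u e \<le> g e" for e
    proof -
      have m: "min (C f u e) (h e) \<le> g e" unfolding g_def by (rule A2[OF cf uB hB hu])
      have cu: "C f u e \<le> u e" by (rule C_le[OF cf uB])
      show ?thesis
      proof (cases "e = c")
        case True
        have "h c = x c" using ca cEv unfolding h_def by (simp add: restr_in)
        then show ?thesis using m True gcx by simp
      next
        case False
        have z''e: "z'' e = xv f e" using z''o False by blast
        have "xv f e \<le> h e" unfolding h_def using xa by simp
        then have "u e = h e" unfolding u_def using z''e by (simp add: sup_max)
        then show ?thesis using m cu by simp
      qed
    qed
    have nCu: "vnorm E f g \<le> vnorm E f (C f u)"
      using A3[OF cf uB hB hu] g_def by simp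
    have Cueq: "C f u e = g e" if "e \<in> Ev E f" for e
      by (rule vnorm_eq[OF finEv Cug nCu that])
    define p where "p = (xv f)(c := x c + 1)"
    have pC: "p e \<le> C f z'' e" if "e \<in> Ev E f" for e
    proof -
      have m: "min (C f u e) (z'' e) \<le> C f z'' e" by (rule A2[OF cf uB z''B z''u])
      show ?thesis
      proof (cases "e = c")
        case True then show ?thesis using Cz'' xc p_def by simp
      next
        case False
        then have z''e: "z'' e = xv f e" using z''o by blast
        have "xv f e \<le> g e"
        proof (cases "e = a")
          case True then show ?thesis using ga xa by simp
        next
          case False
          then show ?thesis using fun_cong[OF g'eq, of e] \<open>e \<noteq> c\<close> unfolding g'_def h_def by simp
        qed
        then show ?thesis using m Cueq[OF that] z''e False p_def by simp
      qed
    qed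
    have np: "vnorm E f p = vnorm E f (xv f) + 1"
      unfolding p_def using vnorm_unit[OF finEv cEv, of "xv f"] addu_eq[of "xv f" c] xc by simp
    have "vnorm E f p \<le> vnorm E f (C f z'')" by (rule vnorm_mono) (rule pC)
    moreover have "vnorm E f (C f z'') \<le> vnorm E f (C f u)" by (rule A3[OF cf uB z''B z''u])
    moreover have "vnorm E f (C f u) = vnorm E f g"
      unfolding vnorm_def by (rule sum.cong) (simp_all add: Cueq)
    ultimately show False using np ngv by simp
  qed
  have cUm: "c \<in> Um" unfolding Um_iff using cE ycx nic sc by simp
  show ?thesis using legal cUm ycx by blast
qed

end


context ctx begin

lemma Up_notint_w: "d \<in> Up \<Longrightarrow> \<not> interesting E b C (fst d) (xv (fst d)) d"
  using gm_noblock[OF sx] Up_iff by blast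

lemma wstep:
  assumes cU: "c \<in> Um" and ycx: "y c < x c"
  shows "\<exists>a. essential_wpair E b C x c a \<and> a \<in> Up \<and> Q a"
proof -
  define w where "w = fst c"
  have cE: "c \<in> E" using cU Um_iff by simp
  have w: "w \<in> W" using edge[OF cE] w_def by simp
  have wv: "w \<in> W \<union> F" using w by simp
  note cf = cfv[OF wv]
  have cEv: "c \<in> Ev E w" using in_Ev_fst[OF cE] w_def by simp
  have xc: "xv w c = x c" using cEv by (simp add: restr_in)
  have cnU: "c \<notin> Up" using Up_Um cU by blast
  define S where "S = Up \<inter> Ev E w"
  have cS: "c \<notin> S" using cnU S_def by simp
  have SEv: "d \<in> S \<Longrightarrow> d \<in> Ev E w" for d using S_def by simp
  have Srb: "d \<in> S \<Longrightarrow> x d < b d" for d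
  proof -
    assume d: "d \<in> S"
    have i: "interesting E b C (snd d) (xv (snd d)) d" and dE: "d \<in> E" using d S_def Up_iff by auto
    have "xv (snd d) d < b d" by (rule int_room[OF i])
    then show ?thesis using in_Ev_snd[OF dE] by (simp add: restr_in)
  qed
  define zx where "zx = (\<lambda>e. if e \<in> S then b e else xv w e)"
  define zc where "zc = (xv w)(c := x c - 1)"
  define z where "z = (\<lambda>e. if e \<in> S then b e else zc e)"
  have xle: "xv w e \<le> zx e" for e
    unfolding zx_def using Srb SEv by (auto simp: restr_in less_imp_le)
  have zle: "z e \<le> zx e" for e unfolding z_def zx_def zc_def using xc by auto
  have zxB: "zx \<in> Bv E b w"
  proof (rule BvI)
    fix e assume ne: "e \<notin> Ev E w" then have "e \<notin> S" using SEv by blast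
    then show "zx e = 0" unfolding zx_def using ne by (simp add: restr_out)
  next
    fix e assume "e \<in> Ev E w" then show "zx e \<le> b e" unfolding zx_def using Bv_le[OF xB[OF wv]] by auto
  qed
  have zB: "z \<in> Bv E b w" by (rule Bv_down[OF zxB zle])
  have Czx: "C w zx = xv w"
  proof -
    have le: "C w zx e \<le> xv w e" for e
    proof (cases "e \<in> S")
      case True
      define z1 where "z1 = (xv w)(e := b e)"
      have eEv: "e \<in> Ev E w" using SEv True by simp
      have xe: "xv w e = x e" using eEv by (simp add: restr_in)
      have z1B: "z1 \<in> Bv E b w" unfolding z1_def by (rule Bv_upd[OF xB[OF wv] eEv]) simp
      have z1zx: "z1 e' \<le> zx e'" for e' unfolding z1_def using xle[of e'] True zx_def by auto
      have m: "min (C w zx e) (z1 e) \<le> C w z1 e" by (rule A2[OF cf zxB z1B z1zx])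
      have "C w zx e \<le> zx e" by (rule C_le[OF cf zxB])
      then have "C w zx e \<le> C w z1 e" using m True unfolding z1_def zx_def by simp
      moreover have "C w z1 e \<le> xv w e"
      proof (rule ccontr)
        assume "\<not> C w z1 e \<le> xv w e"
        then have "interesting E b C w (xv w) e" unfolding interesting_iff
          using eEv z1B Srb[OF True] xe by (intro conjI bexI[of _ z1]) (auto simp: z1_def)
        moreover have "e \<in> Up" using True S_def by simp
        moreover have "fst e = w" using Ev_fst[OF w eEv] .
        ultimately show False using Up_notint_w by blast
      qed
      ultimately show ?thesis by simp
    next
      case False
      then show ?thesis using C_le[OF cf zxB, of e] zx_def by simp
    qed
    have "C w (xv w) = C w zx" by (rule A1[OF cf zxB xB[OF wv]]) (simp_all add: xle le)
    then show ?thesis using xC[OF wv] by simp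
  qed
  define g where "g = C w z"
  have gB: "g \<in> Bv E b w" unfolding g_def by (rule C_in[OF cf zB])
  have gz: "g e \<le> z e" for e unfolding g_def by (rule C_le[OF cf zB])
  have glow: "zc e \<le> g e" for e
  proof -
    have m: "min (C w zx e) (z e) \<le> g e" unfolding g_def by (rule A2[OF cf zxB zB zle])
    show ?thesis
    proof (cases "e \<in> S")
      case True
      then have "xv w e \<le> z e" using xle[of e] unfolding z_def zx_def by simp
      moreover have "zc e = xv w e" using True cS zc_def by auto
      ultimately show ?thesis using m Czx by simp
    next
      case False
      then have "z e = zc e" unfolding z_def by simp
      moreover have "zc e \<le> xv w e" unfolding zc_def using xc by simp
      ultimately show ?thesis using m Czx by (simp add: min_def split: if_splits)
    qed
  qed
  have yz: "yv w e \<le> z e" for e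
  proof (cases "e \<in> Ev E w")
    case False then show ?thesis by (simp add: restr_out)
  next
    case True
    have eE: "e \<in> E" using Ev_E[OF True] .
    have ye: "yv w e = y e" using True by (simp add: restr_in)
    show ?thesis
    proof (cases "e \<in> S")
      case True
      then show ?thesis using gm_le[OF sy, of e] eE ye z_def by simp
    next
      case False
      show ?thesis
      proof (cases "e = c")
        case True then show ?thesis using False ycx ye z_def zc_def by simp
      next
        case ec: False
        have "y e \<le> x e"
        proof (rule ccontr)
          assume "\<not> y e \<le> x e"
          then have "interesting E b C (snd e) (xv (snd e)) e"
            using int_gt_f[of "snd e" e] edge[OF eE] in_Ev_snd[OF eE] by simp
          then have "e \<in> S" using S_def Up_iff eE True by simp
          then show False using False by simp
        qed
        then show ?thesis using False ec ye True z_def zc_def by (simp add: restr_in)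
      qed
    qed
  qed
  have szw: "vnorm E w (xv w) = vnorm E w (yv w)" by (rule sizes[OF wv])
  have ng1: "vnorm E w (xv w) \<le> vnorm E w g"
  proof -
    have "vnorm E w (C w (yv w)) \<le> vnorm E w (C w z)" by (rule A3[OF cf zB yB[OF wv] yz])
    then show ?thesis using yC[OF wv] szw g_def by simp
  qed
  have ng2: "vnorm E w g \<le> vnorm E w (xv w)"
    using A3[OF cf zxB zB zle] Czx g_def by simp
  have xcpos: "x c > 0" using cU Um_iff by simp
  have nzc: "vnorm E w (xv w) = vnorm E w zc + 1"
  proof -
    have "xv w = zc(c := zc c + 1)" unfolding zc_def using xc xcpos by (auto simp: fun_eq_iff)
    then show ?thesis using vnorm_unit[OF finEv cEv, of zc] addu_eq[of zc c] by simp
  qed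
  obtain a where aEv: "a \<in> Ev E w" and ga: "g a > zc a"
  proof -
    have "\<exists>a\<in>Ev E w. g a > zc a"
    proof (rule ccontr)
      assume "\<not> (\<exists>a\<in>Ev E w. g a > zc a)"
      then have "vnorm E w g \<le> vnorm E w zc" by (intro vnorm_mono) (simp add: not_less)
      then show False using ng1 nzc by simp
    qed
    then show ?thesis using that by blast
  qed
  have ac: "a \<noteq> c" using ga gz[of c] cS unfolding z_def by auto
  have aS: "a \<in> S"
  proof (rule ccontr)
    assume "a \<notin> S" then have "z a = zc a" unfolding z_def by simp
    then show False using ga gz[of a] by simp
  qed
  have aU: "a \<in> Up" using aS S_def by simp
  have xa: "xv w a = x a" using aEv by (simp add: restr_in)
  have zca: "zc a = x a" using ac xa zc_def by simp
  define q where "q = zc(a := zc a + 1)"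
  have qg: "q e \<le> g e" for e using glow[of e] ga q_def by auto
  have nq: "vnorm E w q = vnorm E w zc + 1"
    unfolding q_def using vnorm_unit[OF finEv aEv, of zc] addu_eq[of zc a] by simp
  have geq: "g = (\<lambda>e. restr E (fst a) x e + unitv a e - unitv c e)"
  proof (rule ext)
    fix e
    have fa: "fst a = w" using Ev_fst[OF w aEv] .
    show "g e = restr E (fst a) x e + unitv a e - unitv c e"
    proof (cases "e \<in> Ev E w")
      case True
      have "q e = g e" by (rule vnorm_eq[OF finEv qg _ True]) (use ng2 nq nzc in simp)
      then show ?thesis using ac fa xc unfolding q_def zc_def unitv_def by auto
    next
      case False
      then have "e \<noteq> a" "e \<noteq> c" using aEv cEv by auto
      then show ?thesis using Bv_zero[OF gB False] False fa by (simp add: restr_out unitv_def)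
    qed
  qed
  have fa: "fst a = w" using Ev_fst[OF w aEv] .
  have legal: "legal_wpair E b C x c a"
    unfolding legal_wpair_def acceptable_def
  proof (intro conjI)
    show "c \<in> Um" by fact
    show "a \<in> Up" by fact
    show "fst c = fst a" using fa w_def by simp
    show "(\<lambda>e. restr E (fst a) x e + unitv a e - unitv c e) \<in> Bv E b (fst a)" using gB geq fa by simp
    show "C (fst a) (\<lambda>e. restr E (fst a) x e + unitv a e - unitv c e) =
      (\<lambda>e. restr E (fst a) x e + unitv a e - unitv c e)"
      using idem[OF cf zB] geq fa g_def by simp
  qed
  have ess: "essential_wpair E b C x c a"
    unfolding essential_wpair_def
  proof (intro conjI notI)
    show "legal_wpair E b C x c a" by fact
  next
    assume "\<exists>d\<in>(Up \<inter> Ev E (fst a)) - {a}.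
      interesting E b C (fst a) (\<lambda>e. restr E (fst a) x e + unitv a e - unitv c e) d"
    then obtain d where dS: "d \<in> S" and di: "interesting E b C w g d"
      using geq fa S_def by auto
    then obtain z' where z'B: "z' \<in> Bv E b w" and z'd: "z' d > g d"
      and z'o: "\<forall>e'. e' \<noteq> d \<longrightarrow> z' e' = g e'" and Cz': "C w z' d > g d"
      unfolding interesting_iff by blast
    have z'z: "z' e \<le> z e" for e
    proof (cases "e = d")
      case True
      then show ?thesis using Bv_le[OF z'B SEv[OF dS]] dS z_def by simp
    next
      case False then show ?thesis using z'o gz[of e] by metis
    qed
    have gz': "g e \<le> z' e" for e
    proof (cases "e = d")
      case True then show ?thesis using z'd by simp
    next
      case False then show ?thesis using z'o by (metis order.refl)
    qed
    have "C w z' = C w z" by (rule A1[OF cf zB z'B z'z]) (use gz' g_def in simp)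
    then show False using Cz' g_def by simp
  qed
  have Qa: "Q a"
  proof (cases "y a > x a")
    case True then show ?thesis by (simp add: Q_def)
  next
    case False
    define u where "u = sup (yv w) g"
    have uB: "u \<in> Bv E b w" unfolding u_def by (rule Bv_sup[OF yB[OF wv] gB])
    have uz: "u e \<le> z e" for e unfolding u_def using yz[of e] gz[of e] by simp
    have Cu: "C w u = g"
    proof -
      have "C w u = C w z" by (rule A1[OF cf zB uB uz]) (simp add: u_def g_def)
      then show ?thesis by (simp add: g_def)
    qed
    have gax: "g a = x a + 1" using geq fa ac xa by (simp add: unitv_def)
    have "\<exists>z'\<in>Bv E b w. z' a > yv w a \<and> (\<forall>e'. e' \<noteq> a \<longrightarrow> z' e' = yv w e') \<and> C w z' a > yv w a"
    proof (rule int_intro[OF cf yB[OF wv] uB _ aEv, of "x a + 1"])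
      show "\<And>e. yv w e \<le> u e" by (simp add: u_def)
      show "yv w a < x a + 1" using False aEv by (simp add: restr_in)
      show "x a + 1 \<le> u a" using gax by (simp add: u_def)
      show "x a + 1 \<le> C w u a" using gax Cu by simp
    qed
    then have "interesting E b C w (yv w) a" using aEv by (simp add: interesting_iff)
    then have "\<not> interesting E b C (snd a) (yv (snd a)) a"
      using gm_noblock[OF sy Ev_E[OF aEv]] fa by simp
    then show ?thesis by (simp add: Q_def)
  qed
  show ?thesis using ess aU Qa by blast
qed

end


context ctx begin

definition "AA = {a \<in> Up. Q a}"
definition "cfn a = (SOME c. legal_fpair E b C x a c \<and> c \<in> Um \<and> y c < x c)"
definition "awn c = (SOME a. essential_wpair E b C x c a \<and> a \<in> Up \<and> Q a)"
definition "phi a = awn (cfn a)"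

lemma cfn: "a \<in> AA \<Longrightarrow> legal_fpair E b C x a (cfn a) \<and> cfn a \<in> Um \<and> y (cfn a) < x (cfn a)"
  unfolding cfn_def AA_def using fstep by (metis (mono_tags, lifting) mem_Collect_eq someI_ex)
lemma awn: "c \<in> Um \<Longrightarrow> y c < x c \<Longrightarrow> essential_wpair E b C x c (awn c) \<and> awn c \<in> Up \<and> Q (awn c)"
  unfolding awn_def using wstep by (metis (mono_tags, lifting) someI_ex)
lemma phi: "a \<in> AA \<Longrightarrow> essential_wpair E b C x (cfn a) (phi a) \<and> phi a \<in> AA"
  unfolding phi_def using cfn awn AA_def by blast

lemma cfn_Ev: assumes "a \<in> AA" shows "cfn a \<in> Ev E (snd a)" "snd (cfn a) = snd a"
proof -
  show c: "cfn a \<in> Ev E (snd a)" using cfn[OF assms] unfolding legal_fpair_def by blast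
  have "a \<in> E" using assms AA_def Up_iff by simp
  then have "snd a \<in> F" using edge by simp
  then show "snd (cfn a) = snd a" using Ev_snd c by blast
qed

lemma cfn_eq: assumes "a \<in> AA"
  shows "(C (snd a) ((xv (snd a))(a := x a + 1))) ((cfn a) := C (snd a) ((xv (snd a))(a := x a + 1)) (cfn a) + 1)
     = (xv (snd a))(a := x a + 1)"
proof -
  have aE: "a \<in> E" using assms AA_def Up_iff by simp
  have xa: "xv (snd a) a = x a" using in_Ev_snd[OF aE] by (simp add: restr_in)
  have h: "(\<lambda>e'. restr E (snd a) x e' + unitv a e') = (xv (snd a))(a := x a + 1)"
    using addu_eq[of "xv (snd a)" a] xa by simp
  have "(\<lambda>e. C (snd a) (\<lambda>e'. restr E (snd a) x e' + unitv a e') e + unitv (cfn a) e) = (\<lambda>e. restr E (snd a) x e + unitv a e)"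
    using cfn[OF assms] unfolding legal_fpair_def by blast
  then show ?thesis unfolding h addu_eq using xa by simp
qed

lemma fend:
  assumes As: "As \<subseteq> AA" and inj: "inj_on cfn As" and f: "f \<in> F"
    and x''def: "\<And>e. x'' e = x e + (if e \<in> As then 1 else 0) - (if e \<in> cfn ` As then 1 else 0)"
  shows "prefers_eq E b C f (restr E f x'') (yv f)"
proof -
  have fv: "f \<in> W \<union> F" using f by simp
  note cf = cfv[OF fv]
  define Af where "Af = As \<inter> Ev E f"
  have AfA: "a \<in> Af \<Longrightarrow> a \<in> AA" for a using Af_def As by auto
  have AfEv: "a \<in> Af \<Longrightarrow> a \<in> Ev E f" for a using Af_def by auto
  have Afs: "a \<in> Af \<Longrightarrow> snd a = f" for a using Ev_snd[OF f] AfEv by blast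
  have cAf: "e \<in> Ev E f \<Longrightarrow> e \<in> cfn ` As \<Longrightarrow> e \<in> cfn ` Af" for e
  proof -
    assume eEv: "e \<in> Ev E f" and "e \<in> cfn ` As"
    then obtain a' where a': "a' \<in> As" "e = cfn a'" by blast
    have "snd a' = f" using cfn_Ev[of a'] a' As Ev_snd[OF f eEv] by auto
    moreover have "a' \<in> E" using a' As AA_def Up_iff by auto
    ultimately have "a' \<in> Ev E f" using in_Ev_snd by metis
    then show ?thesis using a' Af_def by blast
  qed
  have cAfEv: "a \<in> Af \<Longrightarrow> cfn a \<in> Ev E f" for a using cfn_Ev[OF AfA] Afs by metis
  have UpUm: "a \<in> AA \<Longrightarrow> a \<notin> cfn ` As" for a
  proof
    assume "a \<in> AA" "a \<in> cfn ` As"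
    then obtain a' where "a' \<in> As" "a = cfn a'" by blast
    then have "a \<in> Um" using cfn As by blast
    then show False using \<open>a \<in> AA\<close> AA_def Up_Um by blast
  qed
  show ?thesis
  proof (cases "Af = {}")
    case True
    have "restr E f x'' = xv f"
    proof (rule ext)
      fix e show "restr E f x'' e = xv f e"
      proof (cases "e \<in> Ev E f")
        case False then show ?thesis by (simp add: restr_out)
      next
        case eEv: True
        have "e \<notin> As" using True eEv Af_def by blast
        moreover have "e \<notin> cfn ` As" using cAf[OF eEv] True by blast
        ultimately show ?thesis using eEv x''def by (simp add: restr_in)
      qed
    qed
    moreover have "prefers_eq E b C f (xv f) (yv f)" using pxy f unfolding precF_def by blast
    ultimately show ?thesis by simp
  next
    case False
    then obtain a0 where a0: "a0 \<in> Af" by blast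
    define u where "u = (\<lambda>e. xv f e + (if e \<in> Af then 1 else 0))"
    define xf where "xf = restr E f x''"
    have rbA: "a \<in> Af \<Longrightarrow> x a < b a" for a
    proof -
      assume a: "a \<in> Af"
      then have "interesting E b C (snd a) (xv (snd a)) a" using AfA AA_def Up_iff by simp
      then have "xv f a < b a" using int_room Afs[OF a] by metis
      then show ?thesis using AfEv[OF a] by (simp add: restr_in)
    qed
    have uB: "u \<in> Bv E b f"
    proof (rule BvI)
      fix e assume ne: "e \<notin> Ev E f" then have "e \<notin> Af" using AfEv by blast
      then show "u e = 0" using ne unfolding u_def by (simp add: restr_out)
    next
      fix e assume eEv: "e \<in> Ev E f"
      show "u e \<le> b e"
      proof (cases "e \<in> Af")
        case True then show ?thesis using rbA[OF True] eEv unfolding u_def by (simp add: restr_in)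
      next
        case False then show ?thesis using Bv_le[OF xB[OF fv] eEv] unfolding u_def by simp
      qed
    qed
    define h where "h a = (xv f)(a := x a + 1)" for a
    have hu: "a \<in> Af \<Longrightarrow> h a e \<le> u e" for a e
    proof -
      assume a: "a \<in> Af"
      show ?thesis unfolding h_def u_def using a AfEv[OF a] by (simp add: restr_in)
    qed
    have hB: "a \<in> Af \<Longrightarrow> h a \<in> Bv E b f" for a
    proof -
      assume a: "a \<in> Af"
      show ?thesis unfolding h_def by (rule Bv_upd[OF xB[OF fv] AfEv[OF a]]) (use rbA[OF a] in simp)
    qed
    have Ch: "a \<in> Af \<Longrightarrow> (C f (h a))(cfn a := C f (h a) (cfn a) + 1) = h a" for a
      using cfn_eq[OF AfA] Afs h_def by metis
    have cfa: "a \<in> Af \<Longrightarrow> cfn a \<noteq> a" for a using cfn[OF AfA] legal_fpair_def by metis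
    have Chc: "a \<in> Af \<Longrightarrow> C f (h a) (cfn a) + 1 = x (cfn a)" for a
    proof -
      assume a: "a \<in> Af"
      have "C f (h a) (cfn a) + 1 = h a (cfn a)" using fun_cong[OF Ch[OF a], of "cfn a"] by simp
      then show ?thesis using cfa[OF a] cAfEv[OF a] h_def by (simp add: restr_in)
    qed
    have le1: "C f u e \<le> xf e" for e
    proof (cases "e \<in> Ev E f")
      case False
      then show ?thesis using Bv_zero[OF C_in[OF cf uB] False] by simp
    next
      case eEv: True
      have xfe: "xf e = x e + (if e \<in> As then 1 else 0) - (if e \<in> cfn ` As then 1 else 0)"
        using eEv x''def xf_def by (simp add: restr_in)
      have cu: "C f u e \<le> u e" by (rule C_le[OF cf uB])
      show ?thesis
      proof (cases "e \<in> Af")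
        case True
        then have "e \<in> As" "e \<notin> cfn ` As" using Af_def UpUm AfA by auto
        then show ?thesis using cu xfe True eEv unfolding u_def by (simp add: restr_in)
      next
        case nAf: False
        then have nAs: "e \<notin> As" using Af_def eEv by blast
        show ?thesis
        proof (cases "e \<in> cfn ` As")
          case False
          then show ?thesis using cu xfe nAf nAs eEv unfolding u_def by (simp add: restr_in)
        next
          case True
          then obtain a' where a': "a' \<in> Af" "e = cfn a'" using cAf[OF eEv] by blast
          have "min (C f u e) (h a' e) \<le> C f (h a') e" by (rule A2[OF cf uB hB[OF a'(1)] hu[OF a'(1)]])
          moreover have "h a' e = x e" using a' cfa h_def eEv by (simp add: restr_in)
          moreover have "C f (h a') e + 1 = x e" using Chc[OF a'(1)] a'(2) by simp
          ultimately show ?thesis using xfe nAs True by simp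
        qed
      qed
    qed
    have nxf: "vnorm E f xf = vnorm E f (xv f)"
    proof -
      have pw: "xf e + (if e \<in> cfn ` Af then 1 else 0) = xv f e + (if e \<in> Af then 1 else 0)" if eEv: "e \<in> Ev E f" for e
      proof -
        have xfe: "xf e = x e + (if e \<in> As then 1 else 0) - (if e \<in> cfn ` As then 1 else 0)"
          using eEv x''def xf_def by (simp add: restr_in)
        have i1: "e \<in> As \<longleftrightarrow> e \<in> Af" using Af_def eEv by blast
        have i2: "e \<in> cfn ` As \<longleftrightarrow> e \<in> cfn ` Af" using cAf[OF eEv] Af_def by blast
        have i3: "e \<in> cfn ` Af \<Longrightarrow> x e > 0" using cfn AfA Um_iff by blast
        have i4: "e \<in> cfn ` Af \<Longrightarrow> e \<notin> Af" using UpUm AfA Af_def by blast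
        show ?thesis using xfe i1 i2 i3 i4 eEv by (auto simp: restr_in)
      qed
      have "vnorm E f (\<lambda>e. xf e + (if e \<in> cfn ` Af then 1 else 0)) = vnorm E f (\<lambda>e. xv f e + (if e \<in> Af then 1 else 0))"
        unfolding vnorm_def by (rule sum.cong) (simp_all add: pw)
      moreover have "Ev E f \<inter> cfn ` Af = cfn ` Af" using cAfEv by blast
      moreover have "Ev E f \<inter> Af = Af" using AfEv by blast
      moreover have "card (cfn ` Af) = card Af"
        by (rule card_image, rule inj_on_subset[OF inj]) (auto simp: Af_def)
      ultimately show ?thesis using vnorm_ind[OF finEv, where z=xf and A="cfn ` Af" and v=f] vnorm_ind[OF finEv, where z="xv f" and A=Af and v=f] by simp
    qed
    have nCh: "vnorm E f (C f (h a0)) = vnorm E f (xv f)"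
    proof -
      have a0Ev: "a0 \<in> Ev E f" using AfEv[OF a0] .
      have "vnorm E f (h a0) = vnorm E f (xv f) + 1"
        unfolding h_def using vnorm_unit[OF finEv a0Ev, of "xv f"] addu_eq[of "xv f" a0] a0Ev
        by (simp add: restr_in)
      moreover have "vnorm E f (h a0) = vnorm E f (C f (h a0)) + 1"
        using vnorm_unit[OF finEv cAfEv[OF a0], of "C f (h a0)"] addu_eq[of "C f (h a0)" "cfn a0"] Ch[OF a0] by simp
      ultimately show ?thesis by simp
    qed
    have nge: "vnorm E f xf \<le> vnorm E f (C f u)"
      using A3[OF cf uB hB[OF a0] hu[OF a0]] nCh nxf by simp
    have Cu: "C f u = xf"
    proof (rule ext)
      fix e show "C f u e = xf e"
      proof (cases "e \<in> Ev E f")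
        case True show ?thesis by (rule vnorm_eq[OF finEv le1 nge True])
      next
        case False then show ?thesis using Bv_zero[OF C_in[OF cf uB] False] xf_def by (simp add: restr_out)
      qed
    qed
    have xfB: "xf \<in> Bv E b f" using C_in[OF cf uB] Cu by simp
    have xfC: "C f xf = xf" using idem[OF cf uB] Cu by simp
    define M where "M = sup (yv f) (xv f)"
    have MB: "M \<in> Bv E b f" unfolding M_def by (rule Bv_sup[OF yB[OF fv] xB[OF fv]])
    have CM: "C f M = yv f" unfolding M_def by (rule pref_f[OF f])
    define T where "T = sup M u"
    have TB: "T \<in> Bv E b f" unfolding T_def by (rule Bv_sup[OF MB uB])
    have MT: "M e \<le> T e" for e unfolding T_def by simp
    have CTle: "C f T e \<le> yv f e" for e
    proof (cases "e \<in> Af")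
      case False
      have "min (C f T e) (M e) \<le> C f M e" by (rule A2[OF cf TB MB MT])
      moreover have "C f T e \<le> T e" by (rule C_le[OF cf TB])
      moreover have "T e = M e" using False unfolding T_def u_def M_def by (simp add: sup_max)
      ultimately show ?thesis using CM by simp
    next
      case True
      have eEv: "e \<in> Ev E f" using AfEv[OF True] .
      have ye: "yv f e = y e" and xe: "xv f e = x e" using eEv by (simp_all add: restr_in)
      show ?thesis
      proof (cases "y e > x e")
        case True
        have "T e = y e" using True \<open>e \<in> Af\<close> ye xe unfolding T_def M_def u_def by (simp add: sup_max)
        then show ?thesis using C_le[OF cf TB, of e] ye by simp
      next
        case False
        have "Q e" using AfA[OF \<open>e \<in> Af\<close>] AA_def by simp
        then have ni: "\<not> interesting E b C f (yv f) e" using False Afs[OF \<open>e \<in> Af\<close>] Q_def by simp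
        define y' where "y' = (yv f)(e := x e + 1)"
        have y'B: "y' \<in> Bv E b f" unfolding y'_def
          by (rule Bv_upd[OF yB[OF fv] eEv]) (use rbA[OF \<open>e \<in> Af\<close>] in simp)
        have y'T: "y' e' \<le> T e'" for e'
          unfolding y'_def T_def M_def u_def using \<open>e \<in> Af\<close> xe by (simp add: sup_max le_max_iff_disj)
        have "C f y' e \<le> yv f e"
        proof (rule ccontr)
          assume "\<not> C f y' e \<le> yv f e"
          then have "interesting E b C f (yv f) e" unfolding interesting_iff
            using eEv y'B False ye by (intro conjI bexI[of _ y']) (auto simp: y'_def)
          then show False using ni by simp
        qed
        moreover have "min (C f T e) (y' e) \<le> C f y' e" by (rule A2[OF cf TB y'B y'T])
        moreover have "C f T e \<le> T e" by (rule C_le[OF cf TB])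
        moreover have "T e = x e + 1" using False \<open>e \<in> Af\<close> ye xe unfolding T_def M_def u_def by (simp add: sup_max)
        moreover have "y' e = x e + 1" unfolding y'_def by simp
        ultimately show ?thesis by simp
      qed
    qed
    have CT: "C f T = yv f"
    proof -
      have yT: "yv f e \<le> T e" for e using MT[of e] unfolding M_def by simp
      have "C f (yv f) = C f T" by (rule A1[OF cf TB yB[OF fv]]) (simp_all add: CTle yT)
      then show ?thesis using yC[OF fv] by simp
    qed
    have xfu: "xf e \<le> u e" for e using C_le[OF cf uB, of e] Cu by simp
    have supB: "sup (yv f) xf \<in> Bv E b f" by (rule Bv_sup[OF yB[OF fv] xfB])
    have Csup: "C f (sup (yv f) xf) = yv f"
    proof -
      have "C f (sup (yv f) xf) = C f T"
      proof (rule A1[OF cf TB supB])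
        fix e show "sup (yv f) xf e \<le> T e" using xfu[of e] unfolding T_def M_def by (auto simp: sup_max max_def)
      next
        fix e show "C f T e \<le> sup (yv f) xf e" using CT by simp
      qed
      then show ?thesis using CT by simp
    qed
    show ?thesis
    proof (cases "xf = yv f")
      case True then show ?thesis unfolding prefers_eq_def xf_def by simp
    next
      case False
      then show ?thesis unfolding prefers_eq_def prefers_def acceptable_def xf_def[symmetric]
        using yB[OF fv] yC[OF fv] xfB xfC Csup by simp
    qed
  qed
qed

end


lemma funpow_mult_id: "(f ^^ n) a = a \<Longrightarrow> (f ^^ (m * n)) a = a"
proof (induction m)
  case 0 then show ?case by simp
next
  case (Suc m)
  have "(f ^^ (Suc m * n)) a = (f ^^ n) ((f ^^ (m * n)) a)" by (simp add: funpow_add)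
  then show ?case using Suc by simp
qed

lemma funpow_mod: "(f ^^ n) a = a \<Longrightarrow> (f ^^ k) a = (f ^^ (k mod n)) a"
proof -
  assume p: "(f ^^ n) a = a"
  have "(f ^^ k) a = (f ^^ (k mod n + k div n * n)) a" by simp
  also have "\<dots> = (f ^^ (k mod n)) ((f ^^ (k div n * n)) a)" by (simp only: funpow_add comp_apply)
  also have "\<dots> = (f ^^ (k mod n)) a" using funpow_mult_id[OF p] by simp
  finally show ?thesis .
qed

lemma periodic_point:
  assumes fin: "finite A" and a0: "a0 \<in> A" and cl: "\<And>a. a \<in> A \<Longrightarrow> \<phi> a \<in> A"
  shows "\<exists>a\<in>A. \<exists>n>0. (\<phi> ^^ n) a = a \<and> (\<forall>i<n. \<forall>j<n. (\<phi> ^^ i) a = (\<phi> ^^ j) a \<longrightarrow> i = j)"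
proof -
  have iterA: "a \<in> A \<Longrightarrow> (\<phi> ^^ k) a \<in> A" for a k by (induction k) (simp_all add: cl)
  have "\<not> inj_on (\<lambda>k. (\<phi> ^^ k) a0) {0..card A}"
  proof
    assume "inj_on (\<lambda>k. (\<phi> ^^ k) a0) {0..card A}"
    then have "card {0..card A} \<le> card A"
      by (rule card_inj_on_le) (use iterA a0 fin in auto)
    then show False by simp
  qed
  then obtain i j where ij: "i \<noteq> j" "(\<phi> ^^ i) a0 = (\<phi> ^^ j) a0"
    unfolding inj_on_def by blast
  obtain i j where ij2: "i < j" "(\<phi> ^^ i) a0 = (\<phi> ^^ j) a0"
  proof (cases "i < j")
    case True then show ?thesis using that ij by blast
  next
    case False then have "j < i" using ij by simp
    then show ?thesis using that ij by metis
  qed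
  define a1 where "a1 = (\<phi> ^^ i) a0"
  have a1A: "a1 \<in> A" unfolding a1_def by (rule iterA[OF a0])
  have per: "(\<phi> ^^ (j - i)) a1 = a1"
  proof -
    have "(\<phi> ^^ (j - i)) a1 = (\<phi> ^^ (j - i + i)) a0" unfolding a1_def by (simp add: funpow_add)
    also have "\<dots> = a1" using ij2 a1_def by simp
    finally show ?thesis .
  qed
  define P where "P n \<longleftrightarrow> n > 0 \<and> (\<phi> ^^ n) a1 = a1" for n
  have Pex: "P (j - i)" unfolding P_def using per ij2 by simp
  define n where "n = (LEAST n. P n)"
  have Pn: "P n" unfolding n_def by (rule LeastI[of P, OF Pex])
  have dist: "(\<phi> ^^ i') a1 = (\<phi> ^^ j') a1 \<Longrightarrow> i' < j' \<Longrightarrow> j' < n \<Longrightarrow> False" for i' j'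
  proof -
    assume e: "(\<phi> ^^ i') a1 = (\<phi> ^^ j') a1" and l: "i' < j'" "j' < n"
    have "(\<phi> ^^ (n - j' + i')) a1 = (\<phi> ^^ (n - j')) ((\<phi> ^^ i') a1)" by (simp add: funpow_add)
    also have "\<dots> = (\<phi> ^^ (n - j')) ((\<phi> ^^ j') a1)" using e by simp
    also have "\<dots> = (\<phi> ^^ (n - j' + j')) a1" by (simp add: funpow_add)
    also have "\<dots> = a1" using Pn l P_def by simp
    finally have "P (n - j' + i')" unfolding P_def using l by simp
    moreover have "n - j' + i' < n" using l by simp
    ultimately show False using not_less_Least n_def by metis
  qed
  show ?thesis
  proof (intro bexI exI conjI allI impI)
    show "n > 0" "(\<phi> ^^ n) a1 = a1" using Pn P_def by auto
    show "a1 \<in> A" by fact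
  next
    fix i' j' assume "i' < n" "j' < n" "(\<phi> ^^ i') a1 = (\<phi> ^^ j') a1"
    then show "i' = j'" using dist by (metis linorder_neqE_nat)
  qed
qed

lemma cn_Nil: "cycle_nodes [] = []" by (simp add: cycle_nodes_def)
lemma cn_Cons: "cycle_nodes (p # R) = [Wn (fst p), Fn (fst p), Fn (snd p), Wn (snd p)] @ cycle_nodes R"
  by (cases p) (simp add: cycle_nodes_def)
lemma cn_len: "length (cycle_nodes R) = 4 * length R"
  by (induction R) (simp_all add: cn_Nil cn_Cons)
lemma cn_nth: "i < length R \<Longrightarrow> r < 4 \<Longrightarrow>
  cycle_nodes R ! (4 * i + r) = [Wn (fst (R!i)), Fn (fst (R!i)), Fn (snd (R!i)), Wn (snd (R!i))] ! r"
proof (induction R arbitrary: i)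
  case Nil then show ?case by simp
next
  case (Cons p R)
  show ?case
  proof (cases i)
    case 0
    have "r = 0 \<or> r = 1 \<or> r = 2 \<or> r = 3" using Cons.prems by linarith
    then show ?thesis using 0 by (auto simp: cn_Cons)
  next
    case (Suc i')
    have "4 * i + r = 4 + (4 * i' + r)" using Suc by simp
    then have "cycle_nodes (p # R) ! (4 * i + r) = cycle_nodes R ! (4 * i' + r)"
      by (simp add: cn_Cons nth_append)
    then show ?thesis using Cons.IH[of i'] Cons.prems Suc by simp
  qed
qed
lemma cn_set: "set (cycle_nodes R) = Wn ` fst ` set R \<union> Fn ` fst ` set R \<union> Fn ` snd ` set R \<union> Wn ` snd ` set R"
  by (induction R) (auto simp: cn_Nil cn_Cons)
lemma cn_distinct: "distinct (map fst R) \<Longrightarrow> distinct (map snd R) \<Longrightarrow> fst ` set R \<inter> snd ` set R = {}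
  \<Longrightarrow> distinct (cycle_nodes R)"
proof (induction R)
  case Nil then show ?case by (simp add: cn_Nil)
next
  case (Cons p R)
  obtain a c where p: "p = (a, c)" by (cases p)
  have h1: "a \<notin> fst ` set R" "c \<notin> snd ` set R" using Cons.prems p by auto
  have h2: "a \<notin> snd ` set R" "c \<notin> fst ` set R" "a \<noteq> c" using Cons.prems(3) p by force+
  have "distinct (cycle_nodes R)" using Cons by auto
  then show ?case using h1 h2 p by (auto simp: cn_Cons cn_set)
qed
lemma pairs_set: "set (concat (map (\<lambda>(a, c). [a, c]) R)) = fst ` set R \<union> snd ` set R"
  by (induction R) auto
lemma pairs_distinct: "distinct (map fst R) \<Longrightarrow> distinct (map snd R) \<Longrightarrow> fst ` set R \<inter> snd ` set R = {}
  \<Longrightarrow> distinct (concat (map (\<lambda>(a, c). [a, c]) R))"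
proof (induction R)
  case Nil then show ?case by simp
next
  case (Cons p R)
  obtain a c where p: "p = (a, c)" by (cases p)
  have h1: "a \<notin> fst ` set R" "c \<notin> snd ` set R" using Cons.prems p by auto
  have h2: "a \<notin> snd ` set R" "c \<notin> fst ` set R" "a \<noteq> c" using Cons.prems(3) p by force+
  have d: "distinct (concat (map (\<lambda>(a, c). [a, c]) R))" using Cons by auto
  have s: "set (concat (map (\<lambda>(a, c). [a, c]) R)) = fst ` set R \<union> snd ` set R" by (rule pairs_set)
  have "a \<notin> set (concat (map (\<lambda>(a, c). [a, c]) R))" "c \<notin> set (concat (map (\<lambda>(a, c). [a, c]) R))"
    using s h1 h2 by auto
  then show ?case using p d h2(3) by simp
qed

lemma cyc_pred:
  assumes ne: "vs \<noteq> []" and arcs: "\<forall>i<length vs. (vs!i, vs!((i+1) mod length vs)) \<in> A" and v: "v \<in> set vs"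
  shows "\<exists>u\<in>set vs. (u, v) \<in> A"
proof -
  obtain j where j: "j < length vs" "v = vs ! j" using v by (auto simp: in_set_conv_nth)
  show ?thesis
  proof (cases j)
    case 0
    define k where "k = length vs - 1"
    have k: "k < length vs" "(k + 1) mod length vs = j" using ne 0 k_def by auto
    then show ?thesis using arcs j by (metis nth_mem)
  next
    case (Suc k)
    have k: "k < length vs" "(k + 1) mod length vs = j" using j Suc by auto
    then show ?thesis using arcs j by (metis nth_mem)
  qed
qed

lemma del_stepI: "v \<in> S \<Longrightarrow> u \<in> S \<Longrightarrow> (u, v) \<in> A \<Longrightarrow> v \<in> del_step A S"
  unfolding del_step_def by blast

lemma cyc_rem:
  assumes "\<forall>v\<in>set vs. \<exists>u\<in>set vs. (u, v) \<in> A" "set vs \<subseteq> S"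
  shows "set vs \<subseteq> (del_step A ^^ m) S"
proof (induction m)
  case 0 then show ?case using assms by simp
next
  case (Suc m)
  show ?case
  proof
    fix v assume v: "v \<in> set vs"
    obtain u where u: "u \<in> set vs" "(u, v) \<in> A" using assms(1) v by blast
    have X: "u \<in> (del_step A ^^ m) S" "v \<in> (del_step A ^^ m) S" using Suc.IH u v by blast+
    have "v \<in> del_step A ((del_step A ^^ m) S)" by (rule del_stepI[OF X(2) X(1) u(2)])
    then show "v \<in> (del_step A ^^ Suc m) S" by simp
  qed
qed

context ctx begin

lemma Darcs_sub: "(u, v) \<in> Darcs E b C x \<Longrightarrow> u \<in> Dverts E b C x \<and> v \<in> Dverts E b C x"
  unfolding Darcs_def by blast
lemma arc1: "a \<in> Up \<Longrightarrow> (Wn a, Fn a) \<in> Darcs E b C x"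
  unfolding Darcs_def Dverts_def by blast
lemma arc2: "legal_fpair E b C x a c \<Longrightarrow> c \<in> Um \<Longrightarrow> (Fn a, Fn c) \<in> Darcs E b C x"
proof -
  assume l: "legal_fpair E b C x a c" and c: "c \<in> Um"
  have a: "a \<in> Up" using l legal_fpair_def by blast
  show ?thesis unfolding Darcs_def Dverts_def using l a c by blast
qed
lemma arc3: "c \<in> Um \<Longrightarrow> (Fn c, Wn c) \<in> Darcs E b C x"
  unfolding Darcs_def Dverts_def by blast
lemma arc4: "essential_wpair E b C x c a \<Longrightarrow> (Wn c, Wn a) \<in> Darcs E b C x"
proof -
  assume e: "essential_wpair E b C x c a"
  then have c: "c \<in> Um" and a: "a \<in> Up" unfolding essential_wpair_def legal_wpair_def by blast+
  show ?thesis unfolding Darcs_def Dverts_def using e a c by blast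
qed

lemma AA_ne: "\<exists>a. a \<in> AA"
proof -
  obtain e where ne: "x e \<noteq> y e" using xy_ne by (meson ext)
  have eE: "e \<in> E" using ne gm_zero[OF sx] gm_zero[OF sy] by metis
  define f where "f = snd e"
  have f: "f \<in> F" using edge[OF eE] f_def by simp
  have eEv: "e \<in> Ev E f" using in_Ev_snd[OF eE] f_def by simp
  obtain e' where e': "e' \<in> Ev E f" "y e' > x e'"
  proof (cases "y e > x e")
    case True then show ?thesis using that eEv by blast
  next
    case False
    then have lt: "y e < x e" using ne by simp
    have "\<exists>e'\<in>Ev E f. y e' > x e'"
    proof (rule ccontr)
      assume "\<not> (\<exists>e'\<in>Ev E f. y e' > x e')"
      then have "vnorm E f (yv f) < vnorm E f (xv f)"
        using lt eEv by (intro vnorm_less[OF finEv _ eEv]) (auto simp: restr_in not_less)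
      then show False using sizes[of f] f by simp
    qed
    then show ?thesis using that by blast
  qed
  have e'E: "e' \<in> E" using Ev_E[OF e'(1)] .
  have "snd e' = f" using Ev_snd[OF f e'(1)] .
  then have "e' \<in> Up" using int_gt_f[OF f e'] e'E Up_iff by simp
  moreover have "Q e'" using e'(2) Q_def by simp
  ultimately show ?thesis using AA_def by blast
qed

lemma finAA: "finite AA" using finE AA_def Up_iff by (metis (no_types, lifting) finite_subset mem_Collect_eq subsetI)

lemma main: "\<exists>R \<in> rotations E b C x. \<exists>x' :: 'v vec.
           (\<forall>e. int (x' e) = int (x e) + chi R e) \<and> preceqF F E b C x' y"
proof -
  obtain a0 where a0: "a0 \<in> AA" using AA_ne by blast
  obtain a n where aA: "a \<in> AA" and n: "n > 0" and per: "(phi ^^ n) a = a"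
    and dis: "\<And>i j. i < n \<Longrightarrow> j < n \<Longrightarrow> (phi ^^ i) a = (phi ^^ j) a \<Longrightarrow> i = j"
    using periodic_point[OF finAA a0, of phi] phi by blast
  define ai where "ai i = (phi ^^ i) a" for i
  define ci where "ci i = cfn (ai i)" for i
  define R where "R = map (\<lambda>i. (ai i, ci i)) [0..<n]"
  have aiA: "ai i \<in> AA" for i unfolding ai_def by (induction i) (simp_all add: aA phi)
  have aimod: "ai k = ai (k mod n)" for k unfolding ai_def by (rule funpow_mod[OF per])
  have aiSuc: "phi (ai i) = ai (Suc i)" for i unfolding ai_def by simp
  have lenR: "length R = n" unfolding R_def by simp
  have Rnth: "i < n \<Longrightarrow> R ! i = (ai i, ci i)" for i unfolding R_def by simp
  have ci_inj: "i < n \<Longrightarrow> j < n \<Longrightarrow> ci i = ci j \<Longrightarrow> i = j" for i j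
  proof -
    assume ij: "i < n" "j < n" "ci i = ci j"
    then have "ai (Suc i) = ai (Suc j)" using aiSuc phi_def ci_def by metis
    then have "ai (Suc i mod n) = ai (Suc j mod n)" using aimod by metis
    then have "Suc i mod n = Suc j mod n" using dis ai_def n by (metis mod_less_divisor)
    then show "i = j" using ij by (metis Suc_lessI mod_less mod_self nat.inject zero_neq_one Suc_neq_Zero)
  qed
  have setR: "set R = (\<lambda>i. (ai i, ci i)) ` {0..<n}" unfolding R_def by simp
  define As where "As = ai ` {0..<n}"
  have fstR: "fst ` set R = As" unfolding setR As_def by (simp add: image_image)
  have sndR: "snd ` set R = cfn ` As" unfolding setR As_def ci_def by (simp add: image_image)
  have AsA: "As \<subseteq> AA" using aiA As_def by auto
  have dfst: "distinct (map fst R)" unfolding R_def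
    by (simp add: distinct_map inj_on_def ai_def) (use dis in auto)
  have dsnd: "distinct (map snd R)" unfolding R_def
    by (simp add: distinct_map inj_on_def) (use ci_inj in auto)
  have disj: "fst ` set R \<inter> snd ` set R = {}"
  proof -
    have "fst ` set R \<subseteq> Up" using fstR AsA AA_def by auto
    moreover have "snd ` set R \<subseteq> Um" using sndR AsA cfn by auto
    ultimately show ?thesis using Up_Um by blast
  qed
  define vs where "vs = cycle_nodes R"
  have lenvs: "length vs = 4 * n" unfolding vs_def cn_len lenR by (rule refl)
  have vsnth: "i < n \<Longrightarrow> r < 4 \<Longrightarrow> vs ! (4 * i + r) = [Wn (ai i), Fn (ai i), Fn (ci i), Wn (ci i)] ! r" for i r
    unfolding vs_def using cn_nth[of i R r] lenR Rnth by simp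
  have key: "i < n \<Longrightarrow> r < 4 \<Longrightarrow> (vs ! (4 * i + r), vs ! ((4 * i + r + 1) mod (4 * n))) \<in> Darcs E b C x" for i r
  proof -
    assume i: "i < n" and r: "r < 4"
    have ai: "ai i \<in> AA" by (rule aiA)
    have aU: "ai i \<in> Up" using ai AA_def by simp
    have cf: "legal_fpair E b C x (ai i) (ci i)" "ci i \<in> Um" using cfn[OF ai] ci_def by simp_all
    have ess: "essential_wpair E b C x (ci i) (ai (Suc i))" using phi[OF ai] aiSuc ci_def by simp
    consider "r = 0" | "r = 1" | "r = 2" | "r = 3" using r by linarith
    then show ?thesis
    proof cases
      case 1
      have "(4 * i + r + 1) mod (4 * n) = 4 * i + 1" using 1 i by simp
      then show ?thesis using vsnth[OF i, of 0] vsnth[OF i, of 1] 1 arc1[OF aU] by simp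
    next
      case 2
      have "(4 * i + r + 1) mod (4 * n) = 4 * i + 2" using 2 i by simp
      then show ?thesis using vsnth[OF i, of 1] vsnth[OF i, of 2] 2 arc2[OF cf] by simp
    next
      case 3
      have "(4 * i + r + 1) mod (4 * n) = 4 * i + 3" using 3 i by simp
      then show ?thesis using vsnth[OF i, of 2] vsnth[OF i, of 3] 3 arc3[OF cf(2)] by simp
    next
      case 4
      have "(4 * i + r + 1) mod (4 * n) = 4 * ((i + 1) mod n) + 0"
        using 4 by (simp add: mod_mult_mult1[symmetric])
      moreover have "(i + 1) mod n < n" using n by simp
      moreover have "ai ((i + 1) mod n) = ai (Suc i)" using aimod by simp
      ultimately show ?thesis using vsnth[OF i, of 3] vsnth[of "(i + 1) mod n" 0] 4 arc4[OF ess] by simp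
    qed
  qed
  have arcs: "\<forall>k<length vs. (vs ! k, vs ! ((k + 1) mod length vs)) \<in> Darcs E b C x"
  proof (intro allI impI)
    fix k assume k: "k < length vs"
    have kk: "k = 4 * (k div 4) + k mod 4" by simp
    have "k div 4 < n" using k lenvs by simp
    moreover have "k mod 4 < 4" by simp
    ultimately have "(vs ! (4 * (k div 4) + k mod 4), vs ! ((4 * (k div 4) + k mod 4 + 1) mod (4 * n))) \<in> Darcs E b C x"
      by (rule key)
    then show "(vs ! k, vs ! ((k + 1) mod length vs)) \<in> Darcs E b C x" using kk lenvs by metis
  qed
  have vsne: "vs \<noteq> []" using lenvs n by auto
  have vsD: "set vs \<subseteq> Dverts E b C x"
  proof
    fix v assume "v \<in> set vs"
    then obtain k where k: "k < length vs" "v = vs ! k" by (auto simp: in_set_conv_nth)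
    then show "v \<in> Dverts E b C x" using arcs Darcs_sub by blast
  qed
  have vsrem: "set vs \<subseteq> remaining E b C x"
    unfolding remaining_def by (rule cyc_rem[OF _ vsD]) (use cyc_pred[OF vsne arcs] in blast)
  have Rrot: "R \<in> rotations E b C x"
    unfolding rotations_def dir_cycle_def
  proof (intro CollectI conjI)
    show "R \<noteq> []" using lenR n by auto
    show "distinct (concat (map (\<lambda>(a, c). [a, c]) R))" by (rule pairs_distinct[OF dfst dsnd disj])
    show "cycle_nodes R \<noteq> []" using vsne vs_def by simp
    show "distinct (cycle_nodes R)" by (rule cn_distinct[OF dfst dsnd disj])
    show "set (cycle_nodes R) \<subseteq> remaining E b C x" using vsrem vs_def by simp
    show "\<forall>i<length (cycle_nodes R). (cycle_nodes R ! i, cycle_nodes R ! ((i + 1) mod length (cycle_nodes R))) \<in> Darcs E b C x"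
      using arcs vs_def by simp
  qed
  have inj: "inj_on cfn As"
  proof (rule inj_onI)
    fix p q assume "p \<in> As" "q \<in> As" "cfn p = cfn q"
    then obtain i j where "i < n" "j < n" "p = ai i" "q = ai j" "ci i = ci j" using As_def ci_def by auto
    then show "p = q" using ci_inj by blast
  qed
  define x' where "x' e = x e + (if e \<in> As then 1 else 0) - (if e \<in> cfn ` As then 1 else 0)" for e
  have chi_ok: "int (x' e) = int (x e) + chi R e" for e
  proof (cases "e \<in> As")
    case True
    then have "e \<notin> cfn ` As" using disj fstR sndR by blast
    then show ?thesis using True unfolding x'_def chi_def fstR by simp
  next
    case False
    show ?thesis
    proof (cases "e \<in> cfn ` As")
      case True
      then have "e \<in> Um" using cfn AsA by blast
      then have "x e > 0" using Um_iff by simp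
      then show ?thesis using True False unfolding x'_def chi_def fstR sndR by simp
    next
      case c2: False
      then show ?thesis using False unfolding x'_def chi_def fstR sndR by simp
    qed
  qed
  have pf: "\<forall>f\<in>F. prefers_eq E b C f (restr E f x') (yv f)"
    using fend[OF AsA inj] x'_def by blast
  have "preceqF F E b C x' y" unfolding preceqF_def precF_def using pf by blast
  then show ?thesis using Rrot chi_ok by blast
qed

end

theorem proposition3p5:
  fixes W F :: "'v set" and E :: "('v \<times> 'v) set" and b x y :: "'v vec"
    and C :: "'v \<Rightarrow> 'v vec \<Rightarrow> 'v vec"
  assumes "setting W F E b C"
    and "stable W F E b C x" and "stable W F E b C y"
    and "precF F E b C x y"
  shows "\<exists>R \<in> rotations E b C x. \<exists>x' :: 'v vec.
           (\<forall>e. int (x' e) = int (x e) + chi R e) \<and> preceqF F E b C x' y"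
proof -
  interpret ctx W F E b x y C using assms by unfold_locales
  show ?thesis by (rule main)
qed


end
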